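(* Let $f$ be a $\beta$-Hölder smooth function on $[0,1]^d$ with $\frac{\partial^{\bm\alpha}f(\bm\eta/K)}{\bm\alpha!}\in[-1,1]$ for all relevant $\bm\alpha,\bm\eta$. Given $s\in\mathbb{N}^+$, $\bm\alpha\in\mathbb{N}_0^d$ with $\|\bm\alpha\|_1\le s$, $K\in\mathbb{N}$ and $\bm\eta\in\{0,1,\dots,K-1\}^d$, there exists a PQC $U^{\bm\alpha}_{\bm\eta}(\bm x)$ such that $$\langle\bm\eta,0|\langle +|^{\otimes d}\,U^{\bm\alpha}_{\bm\eta}(\bm x)\,|\bm\eta,0\rangle|+\rangle^{\otimes d}=\frac{\partial^{\bm\alpha}f(\bm\eta/K)}{\bm\alpha!}\Bigl(\bm x-\frac{\bm\eta}{K}\Bigr)^{\bm\alpha}.$$ The width of the PQC is $O(d\log K)$, its depth is $O(K^d+s)$, and its number of parameters is at most $K^d+s+d$.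
   Context: $\partial^{\bm\alpha}=\partial_1^{\alpha_1}\cdots\partial_d^{\alpha_d}$, $\bm\alpha!=\alpha_1!\cdots\alpha_d!$, $\bm y^{\bm\alpha}=y_1^{\alpha_1}\cdots y_d^{\alpha_d}$. $|\bm\eta\rangle=|\eta_1\rangle\otimes\cdots\otimes|\eta_d\rangle$ with each $|\eta_i\rangle$ a computational basis state on $\lceil\log_2K\rceil$ qubits; $|+\rangle=(|0\rangle+|1\rangle)/\sqrt2$. A parameterized quantum circuit (PQC) is a circuit built from CNOT gates, Hadamard gates and single-qubit gates: Pauli rotations $R_X(\theta)=e^{-i\theta X/2}$, $R_Y$, $R_Z(\theta)=e^{-i\theta Z/2}$ with trainable real angles not depending on the input (possibly controlled on basis states of other registers), or data-encoding gates $S(y)=e^{i\arccos(y)X}=\begin{pmatrix} y & i\sqrt{1-y^2}\\ i\sqrt{1-y^2} & y\end{pmatrix}$ applied to a data value $y$ (here a coordinate of $\bm x-\bm\eta/K$). Width = number of qubits, depth = circuit depth, number of parameters = number of trainable angles. *)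

theory Defs
  imports "HOL-Analysis.Analysis"
begin

text \<open>Vectors in R^d are functions nat => real; only coordinates i < d are meaningful,
  points of the cube are normalised to 0 outside {0..<d}.\<close>

definition cube :: "nat \<Rightarrow> (nat \<Rightarrow> real) set" where
  "cube d = {x. (\<forall>i<d. 0 \<le> x i \<and> x i \<le> 1) \<and> (\<forall>i. d \<le> i \<longrightarrow> x i = 0)}"

definition multi_index :: "nat \<Rightarrow> (nat \<Rightarrow> nat) \<Rightarrow> bool" where
  "multi_index d \<alpha> \<longleftrightarrow> (\<forall>i. d \<le> i \<longrightarrow> \<alpha> i = 0)"

definition mi_norm :: "nat \<Rightarrow> (nat \<Rightarrow> nat) \<Rightarrow> nat" where
  "mi_norm d \<alpha> = (\<Sum>i<d. \<alpha> i)"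

definition mi_fact :: "nat \<Rightarrow> (nat \<Rightarrow> nat) \<Rightarrow> real" where
  "mi_fact d \<alpha> = (\<Prod>i<d. fact (\<alpha> i))"

definition mono_pow :: "nat \<Rightarrow> (nat \<Rightarrow> real) \<Rightarrow> (nat \<Rightarrow> nat) \<Rightarrow> real" where
  "mono_pow d y \<alpha> = (\<Prod>i<d. (y i) ^ (\<alpha> i))"

definition partial :: "nat \<Rightarrow> ((nat \<Rightarrow> real) \<Rightarrow> real) \<Rightarrow> (nat \<Rightarrow> real) \<Rightarrow> real" where
  "partial i g x = deriv (\<lambda>t. g (x(i := t))) (x i)"

definition dpow :: "nat \<Rightarrow> (nat \<Rightarrow> nat) \<Rightarrow> ((nat \<Rightarrow> real) \<Rightarrow> real) \<Rightarrow> (nat \<Rightarrow> real) \<Rightarrow> real" where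
  "dpow d \<alpha> g = foldr (\<lambda>i h. (partial i ^^ \<alpha> i) h) [0..<d] g"

definition grid_point :: "nat \<Rightarrow> nat \<Rightarrow> (nat \<Rightarrow> nat) \<Rightarrow> (nat \<Rightarrow> real)" where
  "grid_point d K \<eta> = (\<lambda>i. if i < d then real (\<eta> i) / real K else 0)"

definition tcoef :: "nat \<Rightarrow> ((nat \<Rightarrow> real) \<Rightarrow> real) \<Rightarrow> (nat \<Rightarrow> nat) \<Rightarrow> (nat \<Rightarrow> real) \<Rightarrow> real" where
  "tcoef d f \<alpha> p = dpow d \<alpha> f p / mi_fact d \<alpha>"

definition eucl_dist :: "nat \<Rightarrow> (nat \<Rightarrow> real) \<Rightarrow> (nat \<Rightarrow> real) \<Rightarrow> real" where
  "eucl_dist d x y = sqrt (\<Sum>i<d. (x i - y i)^2)"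

definition holder_smooth :: "nat \<Rightarrow> real \<Rightarrow> ((nat \<Rightarrow> real) \<Rightarrow> real) \<Rightarrow> bool" where
  "holder_smooth d \<beta> f \<longleftrightarrow> 0 < \<beta> \<and>
     (let n = nat (\<lceil>\<beta>\<rceil> - 1) in
       (\<forall>\<alpha>. multi_index d \<alpha> \<and> mi_norm d \<alpha> < n \<longrightarrow>
          (\<forall>x\<in>cube d. \<forall>i<d. (\<lambda>t. dpow d \<alpha> f (x(i := t))) differentiable (at (x i)))) \<and>
       (\<exists>L. \<forall>\<alpha>. multi_index d \<alpha> \<and> mi_norm d \<alpha> = n \<longrightarrow>
          (\<forall>x\<in>cube d. \<forall>y\<in>cube d.
             \<bar>dpow d \<alpha> f x - dpow d \<alpha> f y\<bar> \<le> L * eucl_dist d x y powr (\<beta> - real n))))"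

datatype axis = AX | AY | AZ

text \<open>Gates: Hadamard on a qubit; CNOT control target; Pauli rotation with axis, target,
  list of basis-state controls (qubit, required value) and trainable angle;
  data-encoding gate S(y_i) on a target qubit with data coordinate i.\<close>
datatype gate =
    Had nat
  | CNOT nat nat
  | Rot axis nat "(nat \<times> bool) list" real
  | Enc nat nat

text \<open>Single-qubit matrices, indexed by bool (False = |0>, True = |1>), row then column.\<close>
definition hmat :: "bool \<Rightarrow> bool \<Rightarrow> complex" where
  "hmat r c = (if r \<and> c then - 1 / sqrt 2 else 1 / sqrt 2)"

definition rotmat :: "axis \<Rightarrow> real \<Rightarrow> bool \<Rightarrow> bool \<Rightarrow> complex" where
  "rotmat a \<theta> r c = (case a of
      AX \<Rightarrow> (if r = c then cos (\<theta>/2) else - \<i> * sin (\<theta>/2))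
    | AY \<Rightarrow> (if r = c then cos (\<theta>/2) else if r then sin (\<theta>/2) else - sin (\<theta>/2))
    | AZ \<Rightarrow> (if r \<noteq> c then 0 else if r then exp (\<i> * \<theta>/2) else exp (- \<i> * \<theta>/2)))"

definition smat :: "real \<Rightarrow> bool \<Rightarrow> bool \<Rightarrow> complex" where
  "smat y r c = (if r = c then complex_of_real y else \<i> * sqrt (1 - y^2))"

type_synonym state = "(nat \<Rightarrow> bool) \<Rightarrow> complex"

definition apply1 :: "(bool \<Rightarrow> bool \<Rightarrow> complex) \<Rightarrow> nat \<Rightarrow> state \<Rightarrow> state" where
  "apply1 M q \<psi> = (\<lambda>b. \<Sum>v\<in>(UNIV :: bool set). M (b q) v * \<psi> (b(q := v)))"

fun gate_sem :: "(nat \<Rightarrow> real) \<Rightarrow> gate \<Rightarrow> state \<Rightarrow> state" where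
  "gate_sem y (Had q) \<psi> = apply1 hmat q \<psi>"
| "gate_sem y (CNOT c t) \<psi> = (\<lambda>b. if b c then \<psi> (b(t := \<not> b t)) else \<psi> b)"
| "gate_sem y (Rot a q cs \<theta>) \<psi> =
     (\<lambda>b. if (\<forall>(c, v)\<in>set cs. b c = v) then apply1 (rotmat a \<theta>) q \<psi> b else \<psi> b)"
| "gate_sem y (Enc q i) \<psi> = apply1 (smat (y i)) q \<psi>"

text \<open>Gates are applied in list order (head first).\<close>
definition circ_sem :: "(nat \<Rightarrow> real) \<Rightarrow> gate list \<Rightarrow> state \<Rightarrow> state" where
  "circ_sem y gs \<psi> = fold (gate_sem y) gs \<psi>"

fun gate_qubits :: "gate \<Rightarrow> nat set" where
  "gate_qubits (Had q) = {q}"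
| "gate_qubits (CNOT c t) = {c, t}"
| "gate_qubits (Rot a q cs \<theta>) = insert q (fst ` set cs)"
| "gate_qubits (Enc q i) = {q}"

fun wf_gate :: "nat \<Rightarrow> nat \<Rightarrow> gate \<Rightarrow> bool" where
  "wf_gate n d (Had q) \<longleftrightarrow> q < n"
| "wf_gate n d (CNOT c t) \<longleftrightarrow> c < n \<and> t < n \<and> c \<noteq> t"
| "wf_gate n d (Rot a q cs \<theta>) \<longleftrightarrow> q < n \<and> (\<forall>(c, v)\<in>set cs. c < n \<and> c \<noteq> q)"
| "wf_gate n d (Enc q i) \<longleftrightarrow> q < n \<and> i < d"

definition depth_step :: "gate \<Rightarrow> (nat \<Rightarrow> nat) \<Rightarrow> (nat \<Rightarrow> nat)" where
  "depth_step g lvl = (let t = Suc (Max (lvl ` gate_qubits g))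
                       in (\<lambda>q. if q \<in> gate_qubits g then t else lvl q))"

definition circ_depth :: "nat \<Rightarrow> gate list \<Rightarrow> nat" where
  "circ_depth n gs = Max (insert 0 (fold depth_step gs (\<lambda>_. 0) ` {..<n}))"

fun is_param :: "gate \<Rightarrow> bool" where
  "is_param (Rot a q cs \<theta>) = True"
| "is_param _ = False"

definition num_params :: "gate list \<Rightarrow> nat" where
  "num_params gs = length (filter is_param gs)"

definition basis :: "nat \<Rightarrow> (nat \<Rightarrow> bool) set" where
  "basis n = {b. \<forall>i. n \<le> i \<longrightarrow> \<not> b i}"

definition braket :: "nat \<Rightarrow> state \<Rightarrow> state \<Rightarrow> complex" where
  "braket n \<phi> \<psi> = (\<Sum>b\<in>basis n. cnj (\<phi> b) * \<psi> b)"

text \<open>Input state |eta,0>|+>^d on n = d*m + a + d qubits: qubits i*m+j (i<d, j<m) hold bit j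
  of eta_i (m = ceil(log2 K)), qubits d*m .. d*m+a-1 are ancillas in |0>, the last d qubits
  are each in |+>.\<close>
definition in_state :: "nat \<Rightarrow> nat \<Rightarrow> nat \<Rightarrow> (nat \<Rightarrow> nat) \<Rightarrow> state" where
  "in_state d m a \<eta> = (\<lambda>b.
     if (\<forall>i<d. \<forall>j<m. b (i*m + j) = odd (\<eta> i div 2^j)) \<and> (\<forall>k<a. \<not> b (d*m + k))
     then complex_of_real ((1 / sqrt 2) ^ d) else 0)"

definition reg_bits :: "nat \<Rightarrow> nat" where
  "reg_bits K = nat \<lceil>log 2 (real K)\<rceil>"

end

theory Submission
  imports Defs "HOL-Computational_Algebra.Fundamental_Theorem_Algebra"
begin
definition revk :: "nat \<Rightarrow> 'a::zero poly \<Rightarrow> 'a poly" where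
  "revk n p = Abs_poly (\<lambda>j. if j \<le> n then coeff p (n - j) else 0)"

lemma coeff_revk: "coeff (revk n p) j = (if j \<le> n then coeff p (n - j) else 0)"
  unfolding revk_def by (subst coeff_Abs_poly[where n=n]) auto

lemma degree_revk: "degree (revk n p) \<le> n"
  by (rule degree_le) (auto simp: coeff_revk)

lemma poly_sum_n:
  fixes p :: "'a::comm_semiring_1 poly"
  assumes "degree p \<le> n"
  shows "poly p x = (\<Sum>i\<le>n. coeff p i * x ^ i)"
proof -
  have "poly p x = (\<Sum>i\<le>degree p. coeff p i * x ^ i)" by (rule poly_altdef)
  also have "\<dots> = (\<Sum>i\<le>n. coeff p i * x ^ i)"
    by (rule sum.mono_neutral_left) (use assms in \<open>auto intro: le_degree\<close>)
  finally show ?thesis .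
qed

lemma poly_revk:
  fixes p :: "'a::field poly"
  assumes "degree p \<le> n" "x \<noteq> 0"
  shows "poly (revk n p) x = x ^ n * poly p (inverse x)"
proof -
  have "poly (revk n p) x = (\<Sum>j\<le>n. coeff p (n - j) * x ^ j)"
    by (subst poly_sum_n[OF degree_revk]) (simp add: coeff_revk)
  also have "\<dots> = (\<Sum>i\<le>n. coeff p i * x ^ (n - i))"
    using sum.atLeastAtMost_rev[of "\<lambda>j. coeff p (n - j) * x ^ j" 0 n]
    by (simp add: atMost_atLeast0)
  also have "\<dots> = (\<Sum>i\<le>n. x ^ n * (coeff p i * inverse x ^ i))"
    by (rule sum.cong) (use assms in \<open>auto simp: power_diff field_simps\<close>)
  also have "\<dots> = x ^ n * poly p (inverse x)"
    by (simp add: poly_sum_n[OF assms(1)] sum_distrib_left)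
  finally show ?thesis .
qed

lemma poly_eq_nz:
  fixes p q :: "real poly"
  assumes "\<And>x. x \<noteq> 0 \<Longrightarrow> poly p x = poly q x"
  shows "p = q"
proof (rule ccontr)
  assume "p \<noteq> q"
  then have "p - q \<noteq> 0" by simp
  then have "finite {x. poly (p - q) x = 0}" by (rule poly_roots_finite)
  moreover have "UNIV - {0} \<subseteq> {x. poly (p - q) x = 0}" using assms by auto
  ultimately have "finite (UNIV - {0::real})" by (rule rev_finite_subset)
  then show False by (simp add: infinite_UNIV_char_0)
qed

lemma revk_eqI:
  fixes p q :: "real poly"
  assumes "degree p \<le> n" "\<And>x. x \<noteq> 0 \<Longrightarrow> x ^ n * poly p (inverse x) = poly q x"
  shows "revk n p = q"
  by (rule poly_eq_nz) (simp add: poly_revk assms)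

lemma revk_mult:
  fixes p q :: "real poly"
  assumes "degree p \<le> m" "degree q \<le> n"
  shows "revk (m + n) (p * q) = revk m p * revk n q"
proof (rule revk_eqI)
  show "degree (p * q) \<le> m + n"
    using degree_mult_le[of p q] assms by linarith
  fix x :: real assume "x \<noteq> 0"
  then show "x ^ (m + n) * poly (p * q) (inverse x) = poly (revk m p * revk n q) x"
    by (simp add: poly_revk assms power_add)
qed

lemma revk_revk:
  fixes p :: "real poly"
  assumes "degree p \<le> n" shows "revk n (revk n p) = p"
  by (rule poly_eq_iff[THEN iffD2]) (use assms in \<open>auto simp: coeff_revk coeff_eq_0\<close>)

lemma revk_smult: "revk n (smult c p) = smult c (revk n p)"
  by (rule poly_eq_iff[THEN iffD2]) (auto simp: coeff_revk)

lemma revk_add: "revk n (p + q) = revk n p + revk n q"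
  by (rule poly_eq_iff[THEN iffD2]) (auto simp: coeff_revk)

lemma revk_diff: "revk n (p - q) = revk n p - revk n (q::'a::ab_group_add poly)"
  by (rule poly_eq_iff[THEN iffD2]) (auto simp: coeff_revk)

abbreviation cpoly :: "real poly \<Rightarrow> complex poly" where
  "cpoly p \<equiv> map_poly complex_of_real p"

lemma cpoly_revk: "cpoly (revk n p) = revk n (cpoly p)"
  by (rule poly_eq_iff[THEN iffD2]) (auto simp: coeff_revk coeff_map_poly)

lemma poly_cpoly_real: "poly (cpoly p) (complex_of_real x) = complex_of_real (poly p x)"
  by (induction p) (auto simp: map_poly_pCons)

lemma poly_cpoly_cnj: "poly (cpoly p) (cnj z) = cnj (poly (cpoly p) z)"
  by (induction p) (auto simp: map_poly_pCons)

lemma cpoly_mult: "cpoly (p * q) = cpoly p * cpoly q"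
  by (rule poly_eq_iff[THEN iffD2]) (simp add: coeff_map_poly coeff_mult)

lemma cpoly_add: "cpoly (p + q) = cpoly p + cpoly q"
  by (rule poly_eq_iff[THEN iffD2]) (simp add: coeff_map_poly)

lemma degree_cpoly[simp]: "degree (cpoly p) = degree p"
  by (rule degree_map_poly) simp

lemma revk1: "revk 1 [:a, b:] = [:b, a:]"
  by (rule poly_eq_iff[THEN iffD2]) (auto simp: coeff_revk coeff_pCons split: nat.splits)

definition FRhyp :: "nat \<Rightarrow> real poly \<Rightarrow> bool" where
  "FRhyp k R \<longleftrightarrow> degree R \<le> 2*k \<and> revk (2*k) R = R \<and> poly R 0 \<noteq> 0 \<and>
     (\<forall>z. cmod z = 1 \<longrightarrow> (\<exists>t>0. poly (cpoly R) z = complex_of_real t * z^k))"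

lemma FR_degree:
  assumes "FRhyp k R" shows "degree R = 2*k"
proof -
  have "coeff R (2*k) = coeff (revk (2*k) R) (2*k)" using assms by (simp add: FRhyp_def)
  also have "\<dots> = coeff R 0" by (simp add: coeff_revk)
  also have "\<dots> \<noteq> 0" using assms by (simp add: FRhyp_def poly_0_coeff_0)
  finally have "2*k \<le> degree R" by (rule le_degree)
  then show ?thesis using assms by (simp add: FRhyp_def)
qed

lemma poly_cpoly_revk:
  assumes "degree p \<le> m" "z \<noteq> 0"
  shows "poly (cpoly (revk m p)) z = z ^ m * poly (cpoly p) (inverse z)"
  by (simp add: cpoly_revk poly_revk assms)

lemma FR_reduce:
  assumes hyp: "FRhyp k R" and dH: "degree H = m" and m: "0 < m"
    and R: "R = H * revk m H * R'"
  shows "m \<le> k \<and> FRhyp (k - m) R'"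
proof -
  have R0: "poly R 0 \<noteq> 0" using hyp by (simp add: FRhyp_def)
  then have H0: "poly H 0 \<noteq> 0" and Hr0: "poly (revk m H) 0 \<noteq> 0" and R'0: "poly R' 0 \<noteq> 0"
    by (auto simp: R)
  have "coeff (revk m H) m = coeff H 0" by (simp add: coeff_revk)
  with H0 have "coeff (revk m H) m \<noteq> 0" by (simp add: poly_0_coeff_0)
  then have "m \<le> degree (revk m H)" by (rule le_degree)
  with degree_revk[of m H] have drH: "degree (revk m H) = m" by simp
  have nz: "H \<noteq> 0" "revk m H \<noteq> 0" "R' \<noteq> 0" using H0 Hr0 R'0 by auto
  have "degree R = m + m + degree R'"
    using nz by (simp add: R degree_mult_eq dH drH)
  with FR_degree[OF hyp] have dR': "degree R' = 2*(k-m)" and mk: "m \<le> k" by auto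
  have e: "2*k = m + m + 2*(k-m)" using mk by simp
  have "revk (2*k) R = revk (m + m + 2*(k-m)) (H * revk m H * R')"
    by (subst e) (simp add: R)
  also have "\<dots> = revk (m + m) (H * revk m H) * revk (2*(k-m)) R'"
    by (rule revk_mult) (use dR' degree_mult_le[of H "revk m H"] dH drH in auto)
  also have "revk (m + m) (H * revk m H) = revk m H * revk m (revk m H)"
    by (rule revk_mult) (use dH drH in auto)
  also have "revk m (revk m H) = H" by (rule revk_revk) (simp add: dH)
  finally have "H * revk m H * revk (2*(k-m)) R' = H * revk m H * R'"
    using hyp by (simp add: FRhyp_def R mult_ac)
  then have pal: "revk (2*(k-m)) R' = R'" using nz by simp
  have pos: "\<exists>t>0. poly (cpoly R') z = complex_of_real t * z^(k-m)" if z: "cmod z = 1" for z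
  proof -
    obtain t where t: "t > 0" "poly (cpoly R) z = complex_of_real t * z^k"
      using hyp z by (auto simp: FRhyp_def)
    have z0: "z \<noteq> 0" using z by auto
    have "z * cnj z = 1" using z by (simp flip: complex_norm_square)
    then have iz: "inverse z = cnj z" by (rule inverse_unique)
    have "poly (cpoly (revk m H)) z = z ^ m * cnj (poly (cpoly H) z)"
      by (simp add: poly_cpoly_revk dH z0 iz poly_cpoly_cnj)
    moreover have "complex_of_real ((cmod (poly (cpoly H) z))^2) = poly (cpoly H) z * cnj (poly (cpoly H) z)"
      by (rule complex_norm_square)
    ultimately have eq: "complex_of_real t * z^k = complex_of_real ((cmod (poly (cpoly H) z))^2) * z^m * poly (cpoly R') z"
      using t by (simp add: R cpoly_mult mult_ac)
    have Hz: "poly (cpoly H) z \<noteq> 0"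
      using t z0 by (auto simp: R cpoly_mult)
    define c where "c = (cmod (poly (cpoly H) z))^2"
    have c: "c > 0" using Hz by (simp add: c_def)
    have "z^k = z^m * z^(k-m)" using mk by (simp flip: power_add)
    then have "poly (cpoly R') z = complex_of_real (t / c) * z^(k-m)"
      using eq c z0 by (simp add: c_def[symmetric] field_simps)
    then show ?thesis using t c by (intro exI[of _ "t/c"]) auto
  qed
  show ?thesis using mk dR' pal R'0 pos by (auto simp: FRhyp_def)
qed

lemma FR_build:
  fixes G' H R' :: "real poly"
  assumes "degree G' \<le> k - m" "G' * revk (k-m) G' = R'" "degree H = m" "m \<le> k"
  shows "degree (H * G') \<le> k \<and> (H * G') * revk k (H * G') = H * revk m H * R'"
proof
  show "degree (H * G') \<le> k" using degree_mult_le[of H G'] assms by linarith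
  have "revk k (H * G') = revk (m + (k-m)) (H * G')" using assms by simp
  also have "\<dots> = revk m H * revk (k-m) G'" by (rule revk_mult) (use assms in auto)
  finally show "(H * G') * revk k (H * G') = H * revk m H * R'"
    using assms(2) by (simp add: mult_ac)
qed

lemma qfac: "poly (cpoly [:(cmod r)^2, -2 * Re r, 1:]) w = (w - r) * (w - cnj r)"
proof -
  have "complex_of_real ((cmod r)^2) = r * cnj r" by (rule complex_norm_square)
  moreover have "complex_of_real (2 * Re r) = r + cnj r" by (simp add: complex_add_cnj)
  ultimately show ?thesis by (simp add: map_poly_pCons algebra_simps)
qed
lemma quad_dvd:
  fixes R :: "real poly" and z :: complex
  assumes "Im z \<noteq> 0" "poly (cpoly R) z = 0"
  shows "[:(cmod z)^2, -2 * Re z, 1:] dvd R"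
proof -
  define q where "q = [:(cmod z)^2, -2 * Re z, 1:]"
  have q0: "q \<noteq> 0" by (simp add: q_def)
  have qz: "poly (cpoly q) z = 0" unfolding q_def qfac by simp
  define m where "m = R mod q"
  have "R = R div q * q + m" by (simp add: m_def)
  then have "cpoly R = cpoly (R div q * q + m)" by simp
  also have "\<dots> = cpoly (R div q) * cpoly q + cpoly m" by (simp add: cpoly_add cpoly_mult)
  finally have "poly (cpoly R) z = poly (cpoly (R div q)) z * poly (cpoly q) z + poly (cpoly m) z" by simp
  then have mz: "poly (cpoly m) z = 0" using assms qz by simp
  have "degree m \<le> 1"
    using degree_mod_less[OF q0, of R] by (auto simp: m_def q_def)
  then have "poly (cpoly m) z = complex_of_real (coeff m 0) + complex_of_real (coeff m 1) * z"
    by (subst poly_sum_n[of _ 1]) (auto simp: coeff_map_poly)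
  with mz have "coeff m 1 * Im z = 0" "coeff m 0 + coeff m 1 * Re z = 0"
    by (auto simp: complex_eq_iff)
  with assms(1) have c: "coeff m 1 = 0" "coeff m 0 = 0" by auto
  have "m = 0"
  proof (rule poly_eq_iff[THEN iffD2], intro allI)
    fix n show "coeff m n = coeff 0 n"
      using c \<open>degree m \<le> 1\<close> coeff_eq_0[of m n] by (cases n; cases "n = 1") auto
  qed
  then show ?thesis unfolding q_def[symmetric] m_def by (simp add: mod_eq_0_iff_dvd)
qed

lemma revk_quad: "r \<noteq> 0 \<Longrightarrow> revk 2 [:(cmod r)^2, -2 * Re r, 1:] = smult ((cmod r)^2) [:(cmod (inverse r))^2, -2 * Re (inverse r), 1:]"
  apply (rule poly_eq_iff[THEN iffD2])
  apply (auto simp: coeff_revk coeff_pCons norm_inverse split: nat.splits)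
   apply (simp add: power_inverse)
  apply (simp add: cmod_power2)
  done

lemma FR_main:
  assumes "FRhyp k R"
  shows "\<exists>G. degree G \<le> k \<and> G * revk k G = R"
  using assms
proof (induction k arbitrary: R rule: less_induct)
  case (less k R)
  show ?case
  proof (cases "k = 0")
    case True
    then have d0: "degree R = 0" using less.prems by (simp add: FRhyp_def)
    have R: "R = [:coeff R 0:]"
    proof (rule poly_eq_iff[THEN iffD2], intro allI)
      fix n show "coeff R n = coeff [:coeff R 0:] n"
        using d0 coeff_eq_0[of R n] by (cases n) auto
    qed
    have "\<forall>z. cmod z = 1 \<longrightarrow> (\<exists>t>0. poly (cpoly R) z = complex_of_real t * z^k)"
      using less.prems by (simp add: FRhyp_def)
    from this[rule_format, of 1] have "\<exists>t>0. poly (cpoly R) 1 = complex_of_real t * 1 ^ k" by simp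
    then obtain t where t: "t > 0" "poly (cpoly R) 1 = complex_of_real t * 1 ^ k" by blast
    have "poly (cpoly R) 1 = complex_of_real (coeff R 0)" by (subst R) (simp add: map_poly_pCons)
    with t have a: "coeff R 0 > 0" by simp
    define G where "G = [:sqrt (coeff R 0):]"
    have "revk 0 G = G" by (rule poly_eq_iff[THEN iffD2]) (auto simp: coeff_revk G_def coeff_pCons split: nat.splits)
    then have "G * revk k G = R" using True a by (subst R) (simp add: G_def)
    then show ?thesis using True by (intro exI[of _ G]) (simp add: G_def)
  next
    case False
    have hyp: "FRhyp k R" by fact
    have dR: "degree R = 2*k" by (rule FR_degree[OF hyp])
    have R0: "poly R 0 \<noteq> 0" using hyp by (simp add: FRhyp_def)
    have "\<not> constant (poly (cpoly R))" using dR False by (simp add: constant_degree)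
    then obtain r where r: "poly (cpoly R) r = 0" using fundamental_theorem_of_algebra by blast
    have r0: "r \<noteq> 0" using r R0 poly_cpoly_real[of R 0] by auto
    have r1: "cmod r \<noteq> 1"
    proof
      assume "cmod r = 1"
      then obtain t where "t > 0" "poly (cpoly R) r = complex_of_real t * r^k"
        using hyp by (auto simp: FRhyp_def)
      with r r0 show False by simp
    qed
    have pal: "poly (cpoly R) w = w ^ (2*k) * poly (cpoly R) (inverse w)" if "w \<noteq> 0" for w
    proof -
      have "poly (cpoly R) w = poly (cpoly (revk (2*k) R)) w" using hyp by (simp add: FRhyp_def)
      also have "\<dots> = w ^ (2*k) * poly (cpoly R) (inverse w)"
        by (rule poly_cpoly_revk) (use that dR in auto)
      finally show ?thesis .
    qed
    have ri: "poly (cpoly R) (inverse r) = 0"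
      using pal[of "inverse r"] r r0 by simp
    obtain H m R' where H: "degree H = m" "0 < m" "R = H * revk m H * R'"
    proof (cases "Im r = 0")
      case True
      define \<rho> where "\<rho> = Re r"
      have rr: "r = complex_of_real \<rho>" using True by (simp add: \<rho>_def complex_eq_iff)
      have \<rho>0: "\<rho> \<noteq> 0" using r0 rr by simp
      have \<rho>1: "\<rho> * \<rho> \<noteq> 1"
      proof
        assume "\<rho> * \<rho> = 1"
        then have "\<bar>\<rho>\<bar> = 1" using power2_eq_1_iff[of \<rho>] by (auto simp: power2_eq_square)
        with r1 rr show False by simp
      qed
      have pr: "poly R \<rho> = 0" using r rr poly_cpoly_real[of R \<rho>] by simp
      have pri: "poly R (inverse \<rho>) = 0"
        using ri rr poly_cpoly_real[of R "inverse \<rho>"] by (simp add: of_real_inverse)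
      from pr obtain R1 where R1: "R = [:-\<rho>, 1:] * R1"
        unfolding poly_eq_0_iff_dvd by (erule dvdE)
      have "poly [:-\<rho>, 1:] (inverse \<rho>) \<noteq> 0"
        using \<rho>0 \<rho>1 by (auto simp: field_simps)
      then have "poly R1 (inverse \<rho>) = 0" using pri R1 by simp
      then obtain R2 where R2: "R1 = [:-inverse \<rho>, 1:] * R2"
        unfolding poly_eq_0_iff_dvd by (erule dvdE)
      have e: "[:-inverse \<rho>, 1:] = smult (- inverse \<rho>) [:1, -\<rho>:]" using \<rho>0 by simp
      have rv: "revk 1 [:-\<rho>, 1:] = [:1, -\<rho>:]" by (rule revk1)
      have "R = [:-\<rho>, 1:] * (smult (- inverse \<rho>) [:1, -\<rho>:] * R2)"
        by (simp only: R1 R2 e)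
      also have "\<dots> = [:-\<rho>, 1:] * revk 1 [:-\<rho>, 1:] * smult (- inverse \<rho>) R2"
        by (simp only: rv mult_smult_left mult_smult_right mult.assoc)
      finally have "R = [:-\<rho>, 1:] * revk 1 [:-\<rho>, 1:] * smult (- inverse \<rho>) R2" .
      moreover have "degree [:-\<rho>, 1:] = 1" by simp
      ultimately show ?thesis by (intro that[of "[:-\<rho>, 1:]" 1 "smult (- inverse \<rho>) R2"]) auto
    next
      case False
      define q where "q = [:(cmod r)^2, -2 * Re r, 1:]"
      obtain R1 where R1: "R = q * R1" using quad_dvd[OF False r] by (auto simp: q_def elim!: dvdE)
      have qfac: "poly (cpoly q) w = (w - r) * (w - cnj r)" for w unfolding q_def by (rule qfac)
      have "poly (cpoly q) (inverse r) \<noteq> 0"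
      proof
        assume "poly (cpoly q) (inverse r) = 0"
        then have "inverse r = r \<or> inverse r = cnj r" by (simp add: qfac)
        then show False
        proof
          assume "inverse r = r"
          then have "r * r = 1" using right_inverse[OF r0] by simp
          then have a1: "Re (r * r) = 1" and a2: "Im (r * r) = 0" by simp_all
          from a2 have "Re r * Im r = 0" by auto
          with False have "Re r = 0" by simp
          with a1 have "- (Im r * Im r) = 1" by simp
          moreover have "Im r * Im r \<ge> 0" by simp
          ultimately show False by linarith
        next
          assume "inverse r = cnj r"
          then have "r * cnj r = 1" using right_inverse[OF r0] by simp
          then have "complex_of_real ((cmod r)^2) = 1" by (simp only: complex_norm_square)
          then have "(cmod r)^2 = 1" by (simp only: of_real_eq_1_iff)
          with r1 show False by (auto simp add: power2_eq_1_iff) (use norm_ge_zero[of r] in linarith)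
        qed
      qed
      then have "poly (cpoly R1) (inverse r) = 0" using ri R1 by (simp add: cpoly_mult)
      moreover have "Im (inverse r) \<noteq> 0" using False by (simp add: power2_eq_square)
      ultimately have "[:(cmod (inverse r))^2, -2 * Re (inverse r), 1:] dvd R1"
        by (intro quad_dvd)
      then obtain R2 where R2: "R1 = [:(cmod (inverse r))^2, -2 * Re (inverse r), 1:] * R2"
        by (erule dvdE)
      have nr: "cmod r \<noteq> 0" using r0 by simp
      have e: "revk 2 q = smult ((cmod r)^2) [:(cmod (inverse r))^2, -2 * Re (inverse r), 1:]"
        unfolding q_def by (rule revk_quad[OF r0])
      have "q * revk 2 q * smult (inverse ((cmod r)^2)) R2 = smult (inverse ((cmod r)^2) * (cmod r)^2) (q * ([:(cmod (inverse r))^2, -2 * Re (inverse r), 1:] * R2))"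
        by (simp only: e mult_smult_left mult_smult_right smult_smult mult.assoc)
      also have "\<dots> = R" using nr by (simp add: R1 R2)
      finally have "R = q * revk 2 q * smult (inverse ((cmod r)^2)) R2" by (rule sym)
      moreover have "degree q = 2" by (simp add: q_def)
      ultimately show ?thesis by (intro that[of q 2 "smult (inverse ((cmod r)^2)) R2"]) auto
    qed
    from FR_reduce[OF hyp H] have mk: "m \<le> k" and h': "FRhyp (k - m) R'" by auto
    from less.IH[OF _ h'] H(2) mk obtain G' where "degree G' \<le> k - m" "G' * revk (k - m) G' = R'"
      by auto
    from FR_build[OF this H(1) mk] H(3) show ?thesis by auto
  qed
qed

lemma cpoly_diff: "cpoly (p - q) = cpoly p - cpoly q"
  by (rule poly_eq_iff[THEN iffD2]) (simp add: coeff_map_poly)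
lemma cpoly_smult: "cpoly (smult c p) = smult (complex_of_real c) (cpoly p)"
  by (rule poly_eq_iff[THEN iffD2]) (simp add: coeff_map_poly)
lemma cpoly_one: "cpoly 1 = 1"
  by (rule poly_eq_iff[THEN iffD2]) (simp add: coeff_map_poly coeff_1)
lemma cpoly_power: "cpoly (p ^ n) = (cpoly p) ^ n"
  by (induction n) (simp_all add: cpoly_mult cpoly_one)
lemma cpoly_sum: "cpoly (sum f S) = (\<Sum>x\<in>S. cpoly (f x))"
  by (induction S rule: infinite_finite_induct) (simp_all add: cpoly_add)

definition P1p :: "real poly" where "P1p = [:1/2, 1/2:]"

definition Inv :: "nat \<Rightarrow> real poly \<Rightarrow> real poly \<Rightarrow> bool" where
  "Inv k A B \<longleftrightarrow> degree A \<le> k \<and> degree B \<le> k \<and> A * revk k A + B * revk k B = monom 1 k"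

lemma degree_P1p_pow: "degree (P1p ^ n) \<le> n"
  using degree_power_le[of P1p n] by (simp add: P1p_def)

lemma poly_P1p: "poly P1p x = (1 + x) / 2"
  by (simp add: P1p_def)

lemma revk_P1p_pow: "revk n (P1p ^ n) = P1p ^ n"
proof (rule revk_eqI[OF degree_P1p_pow])
  fix x :: real assume "x \<noteq> 0"
  then have "x * ((1 + inverse x) / 2) = (1 + x) / 2" by (simp add: field_simps)
  then show "x ^ n * poly (P1p ^ n) (inverse x) = poly (P1p ^ n) x"
    by (simp add: poly_P1p power_mult_distrib[symmetric])
qed

lemma circle_sq:
  assumes "cmod z = 1"
  shows "((1 + z) / 2)^2 = z * complex_of_real ((1 + Re z) / 2)"
proof -
  have zc: "z * cnj z = 1" using assms by (simp flip: complex_norm_square)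
  have re: "complex_of_real (Re z) = (z + cnj z) / 2" by (simp add: complex_add_cnj)
  have "z * complex_of_real ((1 + Re z) / 2) = (z + z * z / 2 + z * cnj z / 2) / 2"
    by (simp add: re field_simps)
  also have "\<dots> = ((1 + z) / 2)^2" by (simp add: zc power2_eq_square field_simps)
  finally show ?thesis by simp
qed

lemma u_bounds:
  assumes "cmod z = 1" shows "0 \<le> (1 + Re z) / 2" "(1 + Re z) / 2 \<le> 1"
  using abs_Re_le_cmod[of z] assms by auto

lemma poly_cpoly_P1p_pow2:
  assumes "cmod z = 1"
  shows "poly (cpoly (P1p ^ (2*k))) z = z ^ k * complex_of_real (((1 + Re z) / 2) ^ k)"
proof -
  have "poly (cpoly P1p) z = (1 + z) / 2" by (simp add: P1p_def map_poly_pCons field_simps)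
  then have "poly (cpoly (P1p ^ (2*k))) z = ((1 + z) / 2) ^ (2 * k)"
    by (simp only: cpoly_power poly_power)
  also have "\<dots> = (((1 + z) / 2)^2) ^ k" by (simp only: power_mult)
  also have "\<dots> = z ^ k * complex_of_real (((1 + Re z) / 2) ^ k)"
    by (simp only: circle_sq[OF assms] power_mult_distrib of_real_power)
  finally show ?thesis .
qed

lemma complete_lt:
  fixes c :: real
  assumes c: "c * c < 1" "c \<noteq> 0"
  shows "\<exists>B. Inv k (smult c (P1p ^ k)) B"
proof -
  define R where "R = monom 1 k - smult (c * c) (P1p ^ (2*k))"
  have d1: "degree (monom (1::real) k) \<le> 2*k" using degree_monom_le[of "1::real" k] by simp
  have d2: "degree (smult (c * c) (P1p ^ (2*k))) \<le> 2*k"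
    using degree_smult_le[of "c*c" "P1p ^ (2*k)"] degree_P1p_pow[of "2*k"] by simp
  have dR: "degree R \<le> 2*k" unfolding R_def by (rule degree_diff_le[OF d1 d2])
  have pal: "revk (2*k) R = R"
  proof (rule revk_eqI[OF dR])
    fix x :: real assume x: "x \<noteq> 0"
    then have "x * ((1 + inverse x) / 2) = (1 + x) / 2" by (simp add: field_simps)
    then have "x ^ (2*k) * ((1 + inverse x) / 2) ^ (2*k) = ((1 + x) / 2) ^ (2*k)"
      by (simp add: power_mult_distrib[symmetric])
    moreover have "x ^ (2*k) * inverse x ^ k = x ^ k" using x
      by (simp add: power_mult mult_2 power_add field_simps power2_eq_square)
    ultimately show "x ^ (2*k) * poly R (inverse x) = poly R x"
      by (simp add: R_def poly_monom poly_P1p right_diff_distrib mult_ac)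
  qed
  have R0: "poly R 0 \<noteq> 0"
  proof (cases "k = 0")
    case True then show ?thesis using c by (simp add: R_def)
  next
    case False then show ?thesis using c by (simp add: R_def poly_monom poly_P1p zero_power)
  qed
  have pos: "\<exists>t>0. poly (cpoly R) z = complex_of_real t * z^k" if z: "cmod z = 1" for z
  proof -
    define u where "u = (1 + Re z) / 2"
    have u: "0 \<le> u" "u \<le> 1" using u_bounds[OF z] by (auto simp: u_def)
    then have "u ^ k \<le> 1" by (simp add: power_le_one)
    moreover have "0 \<le> u^k" using u by simp
    ultimately have "c * c * u ^ k < 1" using c
      by (smt (verit) mult_left_le mult_nonneg_nonneg zero_le_square)
    moreover have "poly (cpoly R) z = complex_of_real (1 - c * c * u ^ k) * z ^ k"
    proof -
      have h: "poly (cpoly (P1p ^ (2*k))) z = z ^ k * complex_of_real (u ^ k)"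
        unfolding u_def by (rule poly_cpoly_P1p_pow2[OF z])
      have "poly (cpoly R) z = z^k - complex_of_real (c*c) * poly (cpoly (P1p ^ (2*k))) z"
        by (simp add: R_def cpoly_diff cpoly_smult map_poly_monom poly_monom)
      also have "\<dots> = complex_of_real (1 - c * c * u ^ k) * z ^ k"
        by (simp only: h) (simp add: algebra_simps)
      finally show ?thesis .
    qed
    ultimately show ?thesis by (intro exI[of _ "1 - c * c * u ^ k"]) auto
  qed
  have "FRhyp k R" using dR pal R0 pos by (simp add: FRhyp_def)
  from FR_main[OF this] obtain G where G: "degree G \<le> k" "G * revk k G = R" by blast
  have "smult c (P1p ^ k) * revk k (smult c (P1p ^ k)) + G * revk k G = monom 1 k"
    by (simp add: G R_def revk_smult revk_P1p_pow power_mult mult_2 power_add)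
  moreover have "degree (smult c (P1p ^ k)) \<le> k"
    using degree_P1p_pow[of k] by (simp add: degree_smult_le)
  ultimately show ?thesis using G by (auto simp: Inv_def)
qed

lemma complete_eq:
  fixes c :: real
  assumes c: "c * c = 1"
  shows "\<exists>B. Inv k (smult c (P1p ^ k)) B"
proof (cases k)
  case 0
  have "revk 0 [:c:] = [:c:]"
    by (rule poly_eq_iff[THEN iffD2]) (auto simp: coeff_revk coeff_pCons split: nat.splits)
  then show ?thesis using c by (intro exI[of _ 0]) (simp add: Inv_def 0 one_pCons)
next
  case (Suc K)
  define X :: "real poly" where "X = [:0, 1:]"
  define S where "S = (\<Sum>i<k. P1p ^ (2*(k - Suc i)) * X ^ i)"
  have dX: "degree (X ^ i) \<le> i" for i using degree_power_le[of X i] by (simp add: X_def)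
  have dS: "degree S \<le> 2*K"
    unfolding S_def
  proof (rule degree_sum_le)
    fix i assume i: "i \<in> {..<k}"
    have "degree (P1p ^ (2*(k - Suc i)) * X ^ i) \<le> 2*(k - Suc i) + i"
      using degree_mult_le[of "P1p ^ (2*(k - Suc i))" "X ^ i"] degree_P1p_pow[of "2*(k - Suc i)"] dX[of i]
      by linarith
    then show "degree (P1p ^ (2*(k - Suc i)) * X ^ i) \<le> 2*K" using i Suc by auto
  qed simp
  have pal: "revk (2*K) S = S"
  proof (rule revk_eqI[OF dS])
    fix x :: real assume x: "x \<noteq> 0"
    then have xa: "x * ((1 + inverse x) / 2) = (1 + x) / 2" by (simp add: field_simps)
    have "x ^ (2*K) * (((1 + inverse x) / 2) ^ (2*(k - Suc i)) * inverse x ^ i)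
          = ((1 + x) / 2) ^ (2*(k - Suc i)) * x ^ i" if i: "i < k" for i
    proof -
      have e: "2*K = 2*(k - Suc i) + i + i" using i Suc by simp
      have "x ^ (2*K) * (((1 + inverse x) / 2) ^ (2*(k - Suc i)) * inverse x ^ i)
          = (x * ((1 + inverse x) / 2)) ^ (2*(k - Suc i)) * x ^ i * (x ^ i * inverse x ^ i)"
        by (subst e) (simp only: power_add power_mult_distrib mult_ac)
      also have "x ^ i * inverse x ^ i = 1" using x by (simp add: power_inverse)
      finally show ?thesis by (simp only: xa mult_1_right)
    qed
    then show "x ^ (2*K) * poly S (inverse x) = poly S x"
      by (simp add: S_def poly_sum poly_P1p X_def sum_distrib_left)
  qed
  have S0: "poly S 0 \<noteq> 0"
    by (simp add: S_def poly_sum Suc sum.lessThan_Suc_shift X_def poly_P1p zero_power)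
  have pos: "\<exists>t>0. poly (cpoly S) z = complex_of_real t * z^K" if z: "cmod z = 1" for z
  proof -
    define u where "u = (1 + Re z) / 2"
    have u: "0 \<le> u" using u_bounds[OF z] by (auto simp: u_def)
    have "poly (cpoly (P1p ^ (2*(k - Suc i)) * X ^ i)) z = z ^ K * complex_of_real (u ^ (k - Suc i))"
      if i: "i < k" for i
    proof -
      have h: "poly (cpoly (P1p ^ (2*(k - Suc i)))) z = z ^ (k - Suc i) * complex_of_real (u ^ (k - Suc i))"
        unfolding u_def by (rule poly_cpoly_P1p_pow2[OF z])
      have "poly (cpoly (X ^ i)) z = z ^ i" by (simp add: cpoly_power X_def map_poly_pCons)
      with h have "poly (cpoly (P1p ^ (2*(k - Suc i)) * X ^ i)) z
          = z ^ (k - Suc i + i) * complex_of_real (u ^ (k - Suc i))"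
        by (simp add: cpoly_mult power_add)
      also have "k - Suc i + i = K" using i Suc by simp
      finally show ?thesis .
    qed
    then have "poly (cpoly S) z = complex_of_real (\<Sum>i<k. u ^ (k - Suc i)) * z ^ K"
      by (simp add: S_def cpoly_sum poly_sum sum_distrib_left sum_distrib_right mult_ac)
    moreover have "(1::real) \<le> (\<Sum>i<k. u ^ (k - Suc i))"
    proof -
      have "u ^ (k - Suc K) \<le> (\<Sum>i<k. u ^ (k - Suc i))"
        by (rule member_le_sum) (use u Suc in auto)
      then show ?thesis using Suc by simp
    qed
    ultimately show ?thesis by (intro exI[of _ "\<Sum>i<k. u ^ (k - Suc i)"]) auto
  qed
  have "FRhyp K S" using dS pal S0 pos by (simp add: FRhyp_def)
  from FR_main[OF this] obtain G where G: "degree G \<le> K" "G * revk K G = S" by blast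
  define B where "B = [:1/2, -1/2:] * G"
  have dB: "degree B \<le> k"
    using degree_mult_le[of "[:1/2, -1/2:]" G] G(1) Suc by (simp add: B_def)
  have "revk k ([:1/2, -1/2:] * G) = revk (1 + K) ([:1/2, -1/2:] * G)" using Suc by simp
  also have "\<dots> = revk 1 [:1/2, -1/2:] * revk K G" by (rule revk_mult) (use G in auto)
  also have "revk 1 [:1/2, -1/2:] = [:-1/2, 1/2:]" by (rule revk1)
  finally have rB: "revk k ([:1/2, -1/2:] * G) = [:-1/2, 1/2:] * revk K G" .
  have BB: "B * revk k B = [:1/2, -1/2:] * [:-1/2, 1/2:] * S"
    unfolding B_def rB G(2)[symmetric] by (simp only: mult_ac)
  have XP: "X - P1p ^ 2 = [:1/2, -1/2:] * [:-1/2, 1/2:]"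
    by (simp add: X_def P1p_def power2_eq_square)
  have "monom 1 k = X ^ k" by (simp add: monom_altdef X_def)
  also have "X ^ k = (P1p ^ 2) ^ k + (X - P1p ^ 2) * (\<Sum>i<k. (P1p ^ 2) ^ (k - Suc i) * X ^ i)"
    using power_diff_sumr2[of X k "P1p ^ 2"] by (simp add: algebra_simps)
  also have "(\<Sum>i<k. (P1p ^ 2) ^ (k - Suc i) * X ^ i) = S"
    by (simp add: S_def power_mult)
  finally have M: "monom 1 k = (P1p ^ 2) ^ k + [:1/2, -1/2:] * [:-1/2, 1/2:] * S"
    by (simp add: XP)
  have "smult c (P1p ^ k) * revk k (smult c (P1p ^ k)) = (P1p ^ 2) ^ k"
    using c by (simp add: revk_smult revk_P1p_pow power_mult[symmetric] mult.commute[of 2] power_mult_distrib power2_eq_square flip: power_add)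
  then have "smult c (P1p ^ k) * revk k (smult c (P1p ^ k)) + B * revk k B = monom 1 k"
    by (simp add: BB M)
  moreover have "degree (smult c (P1p ^ k)) \<le> k"
    using degree_P1p_pow[of k] by (simp add: degree_smult_le)
  ultimately show ?thesis using dB by (auto simp: Inv_def)
qed

lemma complete:
  fixes c :: real
  assumes "\<bar>c\<bar> \<le> 1"
  shows "\<exists>B. Inv k (smult c (P1p ^ k)) B"
proof -
  have cc: "c * c \<le> 1" using assms by (metis abs_mult_self_eq abs_ge_zero mult_le_one)
  show ?thesis
  proof (cases "c = 0")
    case True
    have "revk k (1::real poly) = monom 1 k"
      by (rule poly_eq_iff[THEN iffD2]) (auto simp: coeff_revk coeff_1 coeff_monom)
    then show ?thesis using True by (intro exI[of _ 1]) (simp add: Inv_def)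
  next
    case False
    then show ?thesis using cc complete_lt complete_eq by force
  qed
qed

definition ev :: "nat \<Rightarrow> real poly \<Rightarrow> real \<Rightarrow> complex" where
  "ev k A \<theta> = cis (- (real k * \<theta>)) * poly (cpoly A) (cis (2 * \<theta>))"

definition vecf :: "nat \<Rightarrow> real poly \<Rightarrow> real poly \<Rightarrow> real \<Rightarrow> bool \<Rightarrow> complex" where
  "vecf k A B \<theta> = (\<lambda>r. (ev k A \<theta> + (if r then - \<i> else \<i>) * ev k B \<theta>) / complex_of_real (sqrt 2))"

definition mv :: "(bool \<Rightarrow> bool \<Rightarrow> complex) \<Rightarrow> (bool \<Rightarrow> complex) \<Rightarrow> bool \<Rightarrow> complex" where
  "mv M v = (\<lambda>r. \<Sum>u\<in>(UNIV :: bool set). M r u * v u)"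

definition run1 :: "real \<Rightarrow> real \<Rightarrow> real list \<Rightarrow> (bool \<Rightarrow> complex) \<Rightarrow> bool \<Rightarrow> complex" where
  "run1 y \<phi>0 rest v = fold (\<lambda>\<phi> w. mv (rotmat AZ \<phi>) (mv (smat y) w)) rest (mv (rotmat AZ \<phi>0) v)"

definition plusv :: "bool \<Rightarrow> complex" where "plusv = (\<lambda>_. complex_of_real (1 / sqrt 2))"

lemma ev_add_smult: "ev k (smult a A + smult b B) \<theta> = complex_of_real a * ev k A \<theta> + complex_of_real b * ev k B \<theta>"
  by (simp add: ev_def cpoly_add cpoly_smult algebra_simps)

lemma rotmat_AZ: "rotmat AZ \<phi> r c = (if r \<noteq> c then 0 else if r then cis (\<phi>/2) else cis (-(\<phi>/2)))"
proof -
  have "\<i> * complex_of_real \<phi> / 2 = \<i> * complex_of_real (\<phi>/2)" by simp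
  then show ?thesis by (simp add: rotmat_def cis_conv_exp)
qed

lemma cis_split: "cis x = complex_of_real (cos x) + \<i> * complex_of_real (sin x)"
  by (simp add: complex_eq_iff)

lemma mv_expand: "mv M v = (\<lambda>r. M r False * v False + M r True * v True)"
  by (simp add: mv_def UNIV_bool add.commute)

lemma rot_alg:
  fixes a b :: complex
  shows "cis (-x) * ((a + \<i> * b) / r2) = ((complex_of_real (cos x) * a + complex_of_real (sin x) * b) + \<i> * (complex_of_real (- sin x) * a + complex_of_real (cos x) * b)) / r2"
    and "cis x * ((a + (- \<i>) * b) / r2) = ((complex_of_real (cos x) * a + complex_of_real (sin x) * b) + (- \<i>) * (complex_of_real (- sin x) * a + complex_of_real (cos x) * b)) / r2"
proof -
  have h: "cis (-x) * (a + \<i> * b) = (complex_of_real (cos x) * a + complex_of_real (sin x) * b) + \<i> * (complex_of_real (- sin x) * a + complex_of_real (cos x) * b)"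
    by (simp add: cis_split ring_distribs) (simp add: algebra_simps)
  from h show "cis (-x) * ((a + \<i> * b) / r2) = ((complex_of_real (cos x) * a + complex_of_real (sin x) * b) + \<i> * (complex_of_real (- sin x) * a + complex_of_real (cos x) * b)) / r2"
    by (simp only: times_divide_eq_right add_divide_distrib[symmetric])
  have h: "cis x * (a + (- \<i>) * b) = (complex_of_real (cos x) * a + complex_of_real (sin x) * b) + (- \<i>) * (complex_of_real (- sin x) * a + complex_of_real (cos x) * b)"
    by (simp add: cis_split ring_distribs) (simp add: algebra_simps)
  from h show "cis x * ((a + (- \<i>) * b) / r2) = ((complex_of_real (cos x) * a + complex_of_real (sin x) * b) + (- \<i>) * (complex_of_real (- sin x) * a + complex_of_real (cos x) * b)) / r2"
    by (simp only: times_divide_eq_right add_divide_distrib[symmetric])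
qed

lemma rotmat_vals: "rotmat AZ \<phi> False False = cis (-(\<phi>/2))" "rotmat AZ \<phi> False True = 0"
   "rotmat AZ \<phi> True False = 0" "rotmat AZ \<phi> True True = cis (\<phi>/2)"
  by (simp_all add: rotmat_AZ)

lemma mv_rot:
  "mv (rotmat AZ \<phi>) (vecf k A B \<theta>) =
     vecf k (smult (cos (\<phi>/2)) A + smult (sin (\<phi>/2)) B) (smult (- sin (\<phi>/2)) A + smult (cos (\<phi>/2)) B) \<theta>"
proof
  fix r
  have e1: "ev k (smult (cos (\<phi>/2)) A + smult (sin (\<phi>/2)) B) \<theta> = complex_of_real (cos (\<phi>/2)) * ev k A \<theta> + complex_of_real (sin (\<phi>/2)) * ev k B \<theta>"
    by (rule ev_add_smult)
  have e2: "ev k (smult (- sin (\<phi>/2)) A + smult (cos (\<phi>/2)) B) \<theta> = complex_of_real (- sin (\<phi>/2)) * ev k A \<theta> + complex_of_real (cos (\<phi>/2)) * ev k B \<theta>"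
    by (rule ev_add_smult)
  show "mv (rotmat AZ \<phi>) (vecf k A B \<theta>) r = vecf k (smult (cos (\<phi>/2)) A + smult (sin (\<phi>/2)) B) (smult (- sin (\<phi>/2)) A + smult (cos (\<phi>/2)) B) \<theta> r"
    unfolding vecf_def e1 e2 mv_expand
    by (cases r) (simp_all only: rotmat_vals if_True if_False mult_zero_left add_0_right add_0_left rot_alg)
qed

lemma enc_alg:
  fixes a b :: complex
  shows "complex_of_real (cos t) * ((a + \<i> * b) / r2) + \<i> * complex_of_real (sin t) * ((a + (- \<i>) * b) / r2)
           = (cis t * a + \<i> * (cis (-t) * b)) / r2"
    and "\<i> * complex_of_real (sin t) * ((a + \<i> * b) / r2) + complex_of_real (cos t) * ((a + (- \<i>) * b) / r2)
           = (cis t * a + (- \<i>) * (cis (-t) * b)) / r2"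
proof -
  have h: "complex_of_real (cos t) * (a + \<i> * b) + \<i> * complex_of_real (sin t) * (a + (- \<i>) * b)
           = (cis t * a + \<i> * (cis (-t) * b))"
    by (simp add: cis_split ring_distribs)
  from h show "complex_of_real (cos t) * ((a + \<i> * b) / r2) + \<i> * complex_of_real (sin t) * ((a + (- \<i>) * b) / r2)
           = (cis t * a + \<i> * (cis (-t) * b)) / r2"
    by (simp only: times_divide_eq_right add_divide_distrib[symmetric])
  have h: "\<i> * complex_of_real (sin t) * (a + \<i> * b) + complex_of_real (cos t) * (a + (- \<i>) * b)
           = (cis t * a + (- \<i>) * (cis (-t) * b))"
    by (simp add: cis_split ring_distribs)
  from h show "\<i> * complex_of_real (sin t) * ((a + \<i> * b) / r2) + complex_of_real (cos t) * ((a + (- \<i>) * b) / r2)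
           = (cis t * a + (- \<i>) * (cis (-t) * b)) / r2"
    by (simp only: times_divide_eq_right add_divide_distrib[symmetric])
qed

lemma mv_enc:
  assumes "0 \<le> sin \<theta>"
  shows "mv (smat (cos \<theta>)) (vecf k A B \<theta>) = vecf (Suc k) (pCons 0 A) B \<theta>"
proof
  fix r
  have sq: "sqrt (1 - (cos \<theta>)^2) = sin \<theta>" using assms
    by (simp add: sin_squared_eq[symmetric])
  have sv: "smat (cos \<theta>) False False = complex_of_real (cos \<theta>)" "smat (cos \<theta>) True True = complex_of_real (cos \<theta>)"
     "smat (cos \<theta>) False True = \<i> * complex_of_real (sin \<theta>)" "smat (cos \<theta>) True False = \<i> * complex_of_real (sin \<theta>)"
    by (simp_all add: smat_def sq)
  have c1: "cis (- (real (Suc k) * \<theta>)) * cis (2 * \<theta>) = cis \<theta> * cis (- (real k * \<theta>))"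
  proof -
    have "cis (- (real (Suc k) * \<theta>)) * cis (2 * \<theta>) = cis (- (real (Suc k) * \<theta>) + 2 * \<theta>)" by (rule cis_mult)
    also have "- (real (Suc k) * \<theta>) + 2 * \<theta> = \<theta> + - (real k * \<theta>)" by (simp add: algebra_simps)
    also have "cis \<dots> = cis \<theta> * cis (- (real k * \<theta>))" by (rule cis_mult[symmetric])
    finally show ?thesis .
  qed
  have c2: "cis (- (real (Suc k) * \<theta>)) = cis (-\<theta>) * cis (- (real k * \<theta>))"
  proof -
    have "- (real (Suc k) * \<theta>) = -\<theta> + - (real k * \<theta>)" by (simp add: algebra_simps)
    then show ?thesis by (simp add: cis_mult)
  qed
  have e1: "ev (Suc k) (pCons 0 A) \<theta> = cis \<theta> * ev k A \<theta>"
    unfolding ev_def by (simp add: map_poly_pCons c1[symmetric] mult.assoc)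
  have e2: "ev (Suc k) B \<theta> = cis (-\<theta>) * ev k B \<theta>"
    unfolding ev_def by (simp only: c2 mult.assoc)
  show "mv (smat (cos \<theta>)) (vecf k A B \<theta>) r = vecf (Suc k) (pCons 0 A) B \<theta> r"
    unfolding vecf_def e1 e2 mv_expand
    by (cases r) (simp_all only: sv if_True if_False enc_alg)
qed

lemma coeff_mult_top:
  fixes p q :: "'a::comm_semiring_1 poly"
  assumes "degree p \<le> m" "degree q \<le> n"
  shows "coeff (p * q) (m + n) = coeff p m * coeff q n"
proof -
  have "coeff (p * q) (m + n) = (\<Sum>i\<le>m + n. coeff p i * coeff q (m + n - i))" by (rule coeff_mult)
  also have "\<dots> = (\<Sum>i\<le>m + n. if i = m then coeff p m * coeff q n else 0)"
  proof (rule sum.cong)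
    fix i assume "i \<in> {..m + n}"
    show "coeff p i * coeff q (m + n - i) = (if i = m then coeff p m * coeff q n else 0)"
    proof (cases "i = m")
      case False
      then have "m < i \<or> n < m + n - i" by auto
      then show ?thesis using assms False by (auto simp: coeff_eq_0)
    qed simp
  qed simp
  also have "\<dots> = coeff p m * coeff q n" by simp
  finally show ?thesis .
qed

lemma rot_inv:
  fixes A B :: "real poly"
  assumes "c * c + s * s = 1"
  shows "(smult c A - smult s B) * revk k (smult c A - smult s B) + (smult s A + smult c B) * revk k (smult s A + smult c B)
         = A * revk k A + B * revk k B"
proof -
  have "(smult c A - smult s B) * revk k (smult c A - smult s B) + (smult s A + smult c B) * revk k (smult s A + smult c B)
      = smult (c * c + s * s) (A * revk k A + B * revk k B)"
    by (simp add: revk_diff revk_add revk_smult algebra_simps smult_add_left smult_add_right)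
  then show ?thesis using assms by simp
qed

lemma unit_choice:
  fixes a0 b0 aK bK :: real
  assumes "aK * a0 + bK * b0 = 0"
  shows "\<exists>c s. c * c + s * s = 1 \<and> c * a0 - s * b0 = 0 \<and> s * aK + c * bK = 0"
proof (cases "aK * aK + bK * bK = 0")
  case False
  define n where "n = sqrt (aK * aK + bK * bK)"
  have "0 \<le> aK * aK + bK * bK" by simp
  with False have pos: "0 < aK * aK + bK * bK" by linarith
  then have n: "n > 0" "n * n = aK * aK + bK * bK"
    by (simp_all add: n_def)
  show ?thesis
    by (rule exI[of _ "aK / n"], rule exI[of _ "- bK / n"])
       (use n assms pos in \<open>auto simp: field_simps add_divide_distrib[symmetric]\<close>)
next
  case True
  then have z: "aK = 0" "bK = 0" by (auto simp: sum_squares_eq_zero_iff)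
  show ?thesis
  proof (cases "a0 * a0 + b0 * b0 = 0")
    case True
    then show ?thesis using z by (intro exI[of _ 1] exI[of _ 0]) auto
  next
    case False
    define n where "n = sqrt (a0 * a0 + b0 * b0)"
    have "0 \<le> a0 * a0 + b0 * b0" by simp
    with False have pos: "0 < a0 * a0 + b0 * b0" by linarith
    then have n: "n > 0" "n * n = a0 * a0 + b0 * b0"
      by (simp_all add: n_def)
    show ?thesis
      by (rule exI[of _ "b0 / n"], rule exI[of _ "a0 / n"])
         (use n z pos in \<open>auto simp: field_simps add_divide_distrib[symmetric]\<close>)
  qed
qed

lemma plusv_vecf: "plusv = vecf 0 1 0 \<theta>"
  by (auto simp: plusv_def vecf_def ev_def cpoly_one)

lemma qsp:
  assumes "Inv k A B"
  shows "\<exists>\<phi>0 rest. length rest = k \<and> (\<forall>\<theta>. 0 \<le> sin \<theta> \<longrightarrow> run1 (cos \<theta>) \<phi>0 rest plusv = vecf k A B \<theta>)"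
  using assms
proof (induction k arbitrary: A B)
  case 0
  then have dA: "degree A = 0" and dB: "degree B = 0" by (auto simp: Inv_def)
  have A: "A = [:coeff A 0:]"
    by (rule poly_eq_iff[THEN iffD2]) (use dA coeff_eq_0[of A] in \<open>auto simp: coeff_pCons split: nat.splits\<close>)
  have B: "B = [:coeff B 0:]"
    by (rule poly_eq_iff[THEN iffD2]) (use dB coeff_eq_0[of B] in \<open>auto simp: coeff_pCons split: nat.splits\<close>)
  have "coeff (A * revk 0 A + B * revk 0 B) 0 = coeff (monom 1 0) 0" using 0 by (simp add: Inv_def)
  then have "coeff A 0 * coeff A 0 + coeff B 0 * coeff B 0 = 1" by (simp add: coeff_revk coeff_mult)
  then have "(coeff A 0)^2 + (- coeff B 0)^2 = 1" by (simp add: power2_eq_square)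
  then obtain t where t: "coeff A 0 = cos t" "- coeff B 0 = sin t" by (rule sincos_total_2pi) auto
  have "run1 (cos \<theta>) (2 * t) [] plusv = vecf 0 A B \<theta>" for \<theta>
  proof -
    have "run1 (cos \<theta>) (2 * t) [] plusv = vecf 0 (smult (cos t) 1 + smult (sin t) 0) (smult (- sin t) 1 + smult (cos t) 0) \<theta>"
      by (simp add: run1_def plusv_vecf[of \<theta>] mv_rot)
    also have "smult (cos t) 1 + smult (sin t) 0 = A" using t by (subst A) (simp add: one_pCons)
    also have "smult (- sin t) 1 + smult (cos t) 0 = B" using t by (subst B) (simp add: one_pCons)
    finally show ?thesis .
  qed
  then show ?case by (intro exI[of _ "2 * t"] exI[of _ "[]"]) auto
next
  case (Suc k)
  let ?K = "Suc k"
  have inv: "Inv ?K A B" by fact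
  then have dA: "degree A \<le> ?K" and dB: "degree B \<le> ?K" and id: "A * revk ?K A + B * revk ?K B = monom 1 ?K"
    by (auto simp: Inv_def)
  have "coeff (A * revk ?K A + B * revk ?K B) (?K + ?K) = coeff (monom 1 ?K) (?K + ?K)" by (simp only: id)
  then have top: "coeff A ?K * coeff A 0 + coeff B ?K * coeff B 0 = 0"
    by (simp only: coeff_add coeff_mult_top[OF dA degree_revk] coeff_mult_top[OF dB degree_revk]) (simp add: coeff_revk coeff_monom)
  obtain c s where cs: "c * c + s * s = 1" "c * coeff A 0 - s * coeff B 0 = 0" "s * coeff A ?K + c * coeff B ?K = 0"
    using unit_choice[OF top] by blast
  have "c^2 + s^2 = 1" using cs by (simp add: power2_eq_square)
  then obtain t where t: "c = cos t" "s = sin t" by (rule sincos_total_2pi) auto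
  define A' where "A' = smult c A - smult s B"
  define B' where "B' = smult s A + smult c B"
  have dA': "degree A' \<le> ?K" unfolding A'_def
    by (rule degree_diff_le) (use dA dB degree_smult_le order.trans in blast)+
  have dB': "degree B' \<le> ?K" unfolding B'_def
    by (rule degree_add_le) (use dA dB degree_smult_le order.trans in blast)+
  have id': "A' * revk ?K A' + B' * revk ?K B' = monom 1 ?K"
    unfolding A'_def B'_def rot_inv[OF cs(1)] by (rule id)
  have "coeff A' 0 = 0" using cs by (simp add: A'_def)
  then obtain A'' where A'': "A' = pCons 0 A''" by (metis pCons_cases coeff_pCons_0)
  have dA'': "degree A'' \<le> k"
    using dA' by (cases "A'' = 0") (auto simp: A'')
  have "coeff B' ?K = 0" using cs by (simp add: B'_def)
  then have dB'': "degree B' \<le> k"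
    by (intro degree_le) (metis Suc_lessI coeff_eq_0 dB' le_less_trans lessI linorder_not_le)
  have r1: "revk ?K (pCons 0 A'') = revk k A''"
    by (rule poly_eq_iff[THEN iffD2]) (auto simp: coeff_revk coeff_pCons Suc_diff_le split: nat.splits)
  have r2: "revk ?K B' = pCons 0 (revk k B')"
    by (rule poly_eq_iff[THEN iffD2]) (use dB'' in \<open>auto simp: coeff_revk coeff_pCons coeff_eq_0 split: nat.splits\<close>)
  have "pCons 0 (A'' * revk k A'' + B' * revk k B') = pCons 0 (monom 1 k)"
    using id' by (simp add: r1 r2 A'' monom_Suc)
  then have "Inv k A'' B'" using dA'' dB'' by (simp add: Inv_def)
  from Suc.IH[OF this] obtain \<phi>0 rest where IH: "length rest = k"
    "\<And>\<theta>. 0 \<le> sin \<theta> \<Longrightarrow> run1 (cos \<theta>) \<phi>0 rest plusv = vecf k A'' B' \<theta>" by blast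
  have "run1 (cos \<theta>) \<phi>0 (rest @ [2 * t]) plusv = vecf ?K A B \<theta>" if th: "0 \<le> sin \<theta>" for \<theta>
  proof -
    have "run1 (cos \<theta>) \<phi>0 (rest @ [2 * t]) plusv = mv (rotmat AZ (2 * t)) (mv (smat (cos \<theta>)) (run1 (cos \<theta>) \<phi>0 rest plusv))"
      by (simp add: run1_def)
    also have "\<dots> = mv (rotmat AZ (2 * t)) (vecf ?K A' B' \<theta>)"
      by (simp add: IH(2)[OF th] mv_enc[OF th] A'')
    also have "\<dots> = vecf ?K (smult c A' + smult s B') (smult (- s) A' + smult c B') \<theta>"
      by (simp add: mv_rot t)
    also have "smult c A' + smult s B' = A"
    proof (rule poly_eq_iff[THEN iffD2], intro allI)
      fix n
      have "c * (c * coeff A n - s * coeff B n) + s * (s * coeff A n + c * coeff B n) = (c * c + s * s) * coeff A n"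
        by (simp add: algebra_simps)
      then show "coeff (smult c A' + smult s B') n = coeff A n" using cs(1) by (simp add: A'_def B'_def)
    qed
    also have "smult (- s) A' + smult c B' = B"
    proof (rule poly_eq_iff[THEN iffD2], intro allI)
      fix n
      have "- s * (c * coeff A n - s * coeff B n) + c * (s * coeff A n + c * coeff B n) = (c * c + s * s) * coeff B n"
        by (simp add: algebra_simps)
      then show "coeff (smult (- s) A' + smult c B') n = coeff B n" using cs(1) by (simp add: A'_def B'_def)
    qed
    finally show ?thesis .
  qed
  then show ?case using IH(1) by (intro exI[of _ \<phi>0] exI[of _ "rest @ [2 * t]"]) auto
qed

definition amp :: "(bool \<Rightarrow> complex) \<Rightarrow> complex" where
  "amp v = cnj (complex_of_real (1 / sqrt 2)) * v False + cnj (complex_of_real (1 / sqrt 2)) * v True"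

lemma amp_vecf: "amp (vecf k A B \<theta>) = ev k A \<theta>"
proof -
  have s2: "complex_of_real (sqrt 2) * complex_of_real (sqrt 2) = 2"
    by (simp flip: of_real_mult)
  show ?thesis
    by (simp add: amp_def vecf_def field_simps s2)
qed

lemma ev_target: "ev k (smult c (P1p ^ k)) \<theta> = complex_of_real (c * (cos \<theta>) ^ k)"
proof -
  have h: "cis (-\<theta>) * ((1 + cis (2 * \<theta>)) / 2) = complex_of_real (cos \<theta>)"
  proof -
    have "cis (-\<theta>) * cis (2 * \<theta>) = cis \<theta>" by (simp add: cis_mult)
    then have "cis (-\<theta>) * ((1 + cis (2 * \<theta>)) / 2) = (cis (-\<theta>) + cis \<theta>) / 2"
      by (simp add: field_simps)
    also have "\<dots> = complex_of_real (cos \<theta>)" by (simp add: cis_split)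
    finally show ?thesis .
  qed
  have hp: "poly (cpoly P1p) (cis (2 * \<theta>)) = (1 + cis (2 * \<theta>)) / 2"
    by (simp add: P1p_def map_poly_pCons field_simps)
  have dm: "cis (- (real k * \<theta>)) = cis (-\<theta>) ^ k" by (simp only: Complex.DeMoivre mult_minus_right)
  have "ev k (smult c (P1p ^ k)) \<theta> = cis (-\<theta>) ^ k * (complex_of_real c * ((1 + cis (2 * \<theta>)) / 2) ^ k)"
    by (simp only: ev_def cpoly_smult cpoly_power poly_smult poly_power hp dm)
  also have "\<dots> = complex_of_real c * (cis (-\<theta>) ^ k * ((1 + cis (2 * \<theta>)) / 2) ^ k)"
    by (simp only: mult_ac)
  also have "\<dots> = complex_of_real c * (cis (-\<theta>) * ((1 + cis (2 * \<theta>)) / 2)) ^ k"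
    by (simp only: power_mult_distrib)
  also have "\<dots> = complex_of_real (c * (cos \<theta>) ^ k)" by (simp only: h of_real_mult of_real_power)
  finally show ?thesis .
qed

lemma qsp_target:
  fixes c :: real
  assumes "\<bar>c\<bar> \<le> 1"
  shows "\<exists>\<phi>0 rest. length rest = k \<and>
           (\<forall>y. -1 \<le> y \<and> y \<le> 1 \<longrightarrow> amp (run1 y \<phi>0 rest plusv) = complex_of_real (c * y ^ k))"
proof -
  obtain B where "Inv k (smult c (P1p ^ k)) B" using complete[OF assms] by blast
  from qsp[OF this] obtain \<phi>0 rest where r: "length rest = k"
    "\<And>\<theta>. 0 \<le> sin \<theta> \<Longrightarrow> run1 (cos \<theta>) \<phi>0 rest plusv = vecf k (smult c (P1p ^ k)) B \<theta>" by blast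
  have "amp (run1 y \<phi>0 rest plusv) = complex_of_real (c * y ^ k)" if y: "-1 \<le> y" "y \<le> 1" for y
  proof -
    have s: "0 \<le> sin (arccos y)" using y by (simp add: sin_arccos abs_square_le_1)
    have "amp (run1 y \<phi>0 rest plusv) = amp (run1 (cos (arccos y)) \<phi>0 rest plusv)"
      using y by (simp add: cos_arccos)
    also have "\<dots> = complex_of_real (c * (cos (arccos y)) ^ k)"
      by (simp add: r(2)[OF s] amp_vecf ev_target)
    also have "\<dots> = complex_of_real (c * y ^ k)" using y by (simp add: cos_arccos)
    finally show ?thesis .
  qed
  then show ?thesis using r(1) by blast
qed

definition pstate :: "nat \<Rightarrow> (nat \<Rightarrow> bool \<Rightarrow> complex) \<Rightarrow> state" where
  "pstate n h = (\<lambda>b. \<Prod>j<n. h j (b j))"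

lemma apply1_pstate:
  assumes "q < n"
  shows "apply1 M q (pstate n h) = pstate n (h(q := mv M (h q)))"
proof
  fix b :: "nat \<Rightarrow> bool"
  define F where "F = (\<Prod>j\<in>{..<n} - {q}. h j (b j))"
  have qn: "q \<in> {..<n}" using assms by simp
  have "pstate n h (b(q := v)) = h q v * F" for v
    unfolding pstate_def F_def
    by (subst prod.remove[OF _ qn]) (auto intro!: prod.cong)
  then have "apply1 M q (pstate n h) b = (\<Sum>v\<in>UNIV. M (b q) v * h q v) * F"
    by (simp add: apply1_def sum_distrib_left mult_ac)
  also have "\<dots> = pstate n (h(q := mv M (h q))) b"
    unfolding pstate_def F_def mv_def
    by (subst prod.remove[OF _ qn]) (auto intro!: prod.cong)
  finally show "apply1 M q (pstate n h) b = pstate n (h(q := mv M (h q))) b" .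
qed

definition qg :: "nat \<Rightarrow> nat \<Rightarrow> real \<Rightarrow> real list \<Rightarrow> gate list" where
  "qg q i \<phi>0 rest = Rot AZ q [] \<phi>0 # concat (map (\<lambda>\<phi>. [Enc q i, Rot AZ q [] \<phi>]) rest)"

lemma gate_rot: "gate_sem y (Rot AZ q [] \<phi>) \<psi> = apply1 (rotmat AZ \<phi>) q \<psi>"
  by simp

lemma circ_qg:
  assumes "q < n"
  shows "circ_sem y (qg q i \<phi>0 rest) (pstate n h) = pstate n (h(q := run1 (y i) \<phi>0 rest (h q)))"
proof -
  have gen: "fold (gate_sem y) (concat (map (\<lambda>\<phi>. [Enc q i, Rot AZ q [] \<phi>]) rest)) (pstate n (h(q := v)))
      = pstate n (h(q := fold (\<lambda>\<phi> w. mv (rotmat AZ \<phi>) (mv (smat (y i)) w)) rest v))" for v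
  proof (induction rest arbitrary: v)
    case Nil then show ?case by simp
  next
    case (Cons \<phi> rest)
    have "fold (gate_sem y) (concat (map (\<lambda>\<phi>. [Enc q i, Rot AZ q [] \<phi>]) (\<phi> # rest))) (pstate n (h(q := v)))
        = fold (gate_sem y) (concat (map (\<lambda>\<phi>. [Enc q i, Rot AZ q [] \<phi>]) rest))
            (apply1 (rotmat AZ \<phi>) q (apply1 (smat (y i)) q (pstate n (h(q := v)))))"
      by simp
    also have "apply1 (rotmat AZ \<phi>) q (apply1 (smat (y i)) q (pstate n (h(q := v))))
        = pstate n (h(q := mv (rotmat AZ \<phi>) (mv (smat (y i)) v)))"
      by (simp add: apply1_pstate[OF assms])
    finally show ?case by (simp add: Cons.IH)
  qed
  have "circ_sem y (qg q i \<phi>0 rest) (pstate n h)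
      = fold (gate_sem y) (concat (map (\<lambda>\<phi>. [Enc q i, Rot AZ q [] \<phi>]) rest)) (apply1 (rotmat AZ \<phi>0) q (pstate n h))"
    by (simp add: circ_sem_def qg_def)
  also have "apply1 (rotmat AZ \<phi>0) q (pstate n h) = pstate n (h(q := mv (rotmat AZ \<phi>0) (h q)))"
    by (rule apply1_pstate[OF assms])
  also have "fold (gate_sem y) (concat (map (\<lambda>\<phi>. [Enc q i, Rot AZ q [] \<phi>]) rest)) \<dots>
      = pstate n (h(q := run1 (y i) \<phi>0 rest (h q)))"
    by (simp add: gen run1_def)
  finally show ?thesis .
qed

lemma circ_sem_append: "circ_sem y (xs @ ys) \<psi> = circ_sem y ys (circ_sem y xs \<psi>)"
  by (simp add: circ_sem_def)

lemma circ_blocks: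
  assumes "D + d \<le> n" "d' \<le> d"
  shows "circ_sem y (concat (map (\<lambda>i. qg (D + i) i (ph i) (rs i)) [0..<d'])) (pstate n h)
       = pstate n (\<lambda>j. if D \<le> j \<and> j < D + d' then run1 (y (j - D)) (ph (j - D)) (rs (j - D)) (h j) else h j)"
  using assms(2)
proof (induction d')
  case 0
  have "(\<lambda>j. if D \<le> j \<and> j < D + 0 then run1 (y (j - D)) (ph (j - D)) (rs (j - D)) (h j) else h j) = h"
    by (auto simp: fun_eq_iff)
  then show ?case by (simp add: circ_sem_def)
next
  case (Suc d')
  have q: "D + d' < n" using Suc.prems assms(1) by simp
  have "circ_sem y (concat (map (\<lambda>i. qg (D + i) i (ph i) (rs i)) [0..<Suc d'])) (pstate n h)
      = circ_sem y (qg (D + d') d' (ph d') (rs d'))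
          (pstate n (\<lambda>j. if D \<le> j \<and> j < D + d' then run1 (y (j - D)) (ph (j - D)) (rs (j - D)) (h j) else h j))"
    using Suc by (simp add: circ_sem_append)
  also have "\<dots> = pstate n (\<lambda>j. if D \<le> j \<and> j < D + Suc d' then run1 (y (j - D)) (ph (j - D)) (rs (j - D)) (h j) else h j)"
    by (subst circ_qg[OF q]) (rule arg_cong[where f="pstate n"], auto simp: fun_eq_iff)
  finally show ?case .
qed

lemma basis_Suc: "basis (Suc n) = basis n \<union> (\<lambda>b. b(n := True)) ` basis n"
proof
  show "basis (Suc n) \<subseteq> basis n \<union> (\<lambda>b. b(n := True)) ` basis n"
  proof
    fix b assume b: "b \<in> basis (Suc n)"
    show "b \<in> basis n \<union> (\<lambda>b. b(n := True)) ` basis n"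
    proof (cases "b n")
      case True
      have "b(n := False) \<in> basis n" using b by (auto simp: basis_def)
      moreover have "b = (b(n := False))(n := True)" using True by (simp add: fun_upd_idem)
      ultimately show ?thesis by blast
    next
      case False
      have "\<forall>i. n \<le> i \<longrightarrow> \<not> b i"
      proof (intro allI impI)
        fix i assume ni: "n \<le> i"
        show "\<not> b i"
        proof (cases "i = n")
          case True with False show ?thesis by simp
        next
          case False with ni have "Suc n \<le> i" by simp
          with b show ?thesis by (simp add: basis_def)
        qed
      qed
      then have "b \<in> basis n" by (simp add: basis_def)
      then show ?thesis by blast
    qed
  qed
  show "basis n \<union> (\<lambda>b. b(n := True)) ` basis n \<subseteq> basis (Suc n)"
    by (auto simp: basis_def)
qed

lemma finite_basis: "finite (basis n)"
proof (induction n)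
  case 0
  have "basis 0 = {\<lambda>_. False}" by (auto simp: basis_def)
  then show ?case by simp
next
  case (Suc n) then show ?case by (simp add: basis_Suc)
qed

lemma sum_basis_prod:
  fixes g :: "nat \<Rightarrow> bool \<Rightarrow> complex"
  shows "(\<Sum>b\<in>basis n. \<Prod>j<n. g j (b j)) = (\<Prod>j<n. g j False + g j True)"
proof (induction n)
  case 0
  have "basis 0 = {\<lambda>_. False}" by (auto simp: basis_def)
  then show ?case by simp
next
  case (Suc n)
  have disj: "basis n \<inter> (\<lambda>b. b(n := True)) ` basis n = {}" by (auto simp: basis_def)
  have inj: "inj_on (\<lambda>b. b(n := True)) (basis n)"
  proof (rule inj_onI)
    fix x y assume x: "x \<in> basis n" and y: "y \<in> basis n" and e: "x(n := True) = y(n := True)"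
    show "x = y"
    proof
      fix j show "x j = y j"
      proof (cases "j = n")
        case True then show ?thesis using x y by (simp add: basis_def)
      next
        case False then show ?thesis using fun_cong[OF e, of j] by simp
      qed
    qed
  qed
  have A: "(\<Prod>j<Suc n. g j (b j)) = (\<Prod>j<n. g j (b j)) * g n False" if "b \<in> basis n" for b
    using that by (simp add: basis_def)
  have B: "(\<Prod>j<Suc n. g j ((b(n := True)) j)) = (\<Prod>j<n. g j (b j)) * g n True" for b
    by simp
  have "(\<Sum>b\<in>basis (Suc n). \<Prod>j<Suc n. g j (b j))
      = (\<Sum>b\<in>basis n. \<Prod>j<Suc n. g j (b j)) + (\<Sum>b\<in>basis n. \<Prod>j<Suc n. g j ((b(n := True)) j))"
    unfolding basis_Suc
    by (subst sum.union_disjoint) (use disj finite_basis inj in \<open>auto simp: sum.reindex\<close>)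
  also have "\<dots> = (\<Sum>b\<in>basis n. (\<Prod>j<n. g j (b j)) * g n False) + (\<Sum>b\<in>basis n. (\<Prod>j<n. g j (b j)) * g n True)"
    by (simp only: sum.cong[OF refl A] B)
  also have "\<dots> = (\<Sum>b\<in>basis n. \<Prod>j<n. g j (b j)) * (g n False + g n True)"
    by (simp add: sum_distrib_right distrib_left)
  finally show ?case by (simp add: Suc.IH)
qed

lemma braket_pstate:
  "braket n (pstate n h0) (pstate n h1) = (\<Prod>j<n. cnj (h0 j False) * h1 j False + cnj (h0 j True) * h1 j True)"
proof -
  have "braket n (pstate n h0) (pstate n h1) = (\<Sum>b\<in>basis n. \<Prod>j<n. cnj (h0 j (b j)) * h1 j (b j))"
    by (simp add: braket_def pstate_def prod.distrib)
  also have "\<dots> = (\<Prod>j<n. cnj (h0 j False) * h1 j False + cnj (h0 j True) * h1 j True)"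
    by (rule sum_basis_prod)
  finally show ?thesis .
qed

lemma prod_indicator:
  assumes "finite A"
  shows "(\<Prod>j\<in>A. if P j then (1::complex) else 0) = (if \<forall>j\<in>A. P j then 1 else 0)"
proof (cases "\<forall>j\<in>A. P j")
  case True then show ?thesis by (simp add: prod.neutral)
next
  case False
  then obtain j where "j \<in> A" "\<not> P j" by blast
  then show ?thesis using assms False by (simp add: prod_zero_iff)
qed

definition pat :: "nat \<Rightarrow> (nat \<Rightarrow> nat) \<Rightarrow> nat \<Rightarrow> bool" where
  "pat m \<eta> j = odd (\<eta> (j div m) div 2 ^ (j mod m))"

definition h0 :: "nat \<Rightarrow> nat \<Rightarrow> (nat \<Rightarrow> nat) \<Rightarrow> nat \<Rightarrow> bool \<Rightarrow> complex" where
  "h0 d m \<eta> j = (if j < d * m then (\<lambda>u. if u = pat m \<eta> j then 1 else 0) else plusv)"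

lemma cond_equiv:
  "(\<forall>i<d. \<forall>j<m. b (i*m + j) = odd (\<eta> i div 2^j)) \<longleftrightarrow> (\<forall>t<d*m. b t = pat m \<eta> t)"
proof
  assume A: "\<forall>i<d. \<forall>j<m. b (i*m + j) = odd (\<eta> i div 2^j)"
  show "\<forall>t<d*m. b t = pat m \<eta> t"
  proof (intro allI impI)
    fix t assume t: "t < d * m"
    then have m: "0 < m" by (cases m) auto
    have "t div m < d" using t m by (simp add: div_less_iff_less_mult)
    moreover have "t mod m < m" using m by simp
    ultimately have "b ((t div m) * m + t mod m) = odd (\<eta> (t div m) div 2^(t mod m))" using A by blast
    then show "b t = pat m \<eta> t" by (simp add: pat_def)
  qed
next
  assume B: "\<forall>t<d*m. b t = pat m \<eta> t"
  show "\<forall>i<d. \<forall>j<m. b (i*m + j) = odd (\<eta> i div 2^j)"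
  proof (intro allI impI)
    fix i j assume i: "i < d" and j: "j < m"
    have "i * m + j < (i + 1) * m" using j by simp
    also have "\<dots> \<le> d * m" using i by (intro mult_right_mono) auto
    finally have "b (i*m + j) = pat m \<eta> (i*m + j)" using B by blast
    also have "\<dots> = odd (\<eta> i div 2^j)" using j by (simp add: pat_def)
    finally show "b (i*m + j) = odd (\<eta> i div 2^j)" .
  qed
qed

lemma in_state_pstate: "in_state d m 0 \<eta> = pstate (d * m + d) (h0 d m \<eta>)"
proof
  fix b
  have split: "{..<d * m + d} = {..<d * m} \<union> {d * m..<d * m + d}" by (rule ivl_disj_un_one(2)[symmetric]) simp
  have "pstate (d * m + d) (h0 d m \<eta>) b
      = (\<Prod>j<d * m. h0 d m \<eta> j (b j)) * (\<Prod>j\<in>{d * m..<d * m + d}. h0 d m \<eta> j (b j))"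
    unfolding pstate_def split by (rule prod.union_disjoint) auto
  also have "(\<Prod>j<d * m. h0 d m \<eta> j (b j)) = (\<Prod>j<d * m. if b j = pat m \<eta> j then 1 else 0)"
    by (rule prod.cong) (auto simp: h0_def)
  also have "\<dots> = (if \<forall>j\<in>{..<d*m}. b j = pat m \<eta> j then 1 else 0)" by (rule prod_indicator) simp
  also have "(\<Prod>j\<in>{d * m..<d * m + d}. h0 d m \<eta> j (b j)) = (\<Prod>j\<in>{d * m..<d * m + d}. complex_of_real (1 / sqrt 2))"
    by (rule prod.cong) (auto simp: h0_def plusv_def)
  also have "\<dots> = complex_of_real ((1 / sqrt 2) ^ d)" by (simp add: prod_constant)
  finally show "in_state d m 0 \<eta> b = pstate (d * m + d) (h0 d m \<eta>) b"
    by (simp add: in_state_def cond_equiv)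
qed

fun gq :: "gate \<Rightarrow> nat" where
  "gq (Had q) = q" | "gq (CNOT c t) = c" | "gq (Rot a q cs \<theta>) = q" | "gq (Enc q i) = q"

lemma depth_step_single: "gate_qubits g = {gq g} \<Longrightarrow> depth_step g lvl = lvl(gq g := Suc (lvl (gq g)))"
  by (simp add: depth_step_def fun_eq_iff)

lemma fold_depth:
  assumes "\<forall>g\<in>set gs. gate_qubits g = {gq g}"
  shows "fold depth_step gs lvl q = lvl q + length (filter (\<lambda>g. gq g = q) gs)"
  using assms by (induction gs arbitrary: lvl) (auto simp: depth_step_single)

lemma qg_cases: "g \<in> set (qg q i \<phi>0 rest) \<Longrightarrow> g = Enc q i \<or> (\<exists>\<phi>. g = Rot AZ q [] \<phi>)"
  by (auto simp: qg_def split: if_splits)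

lemma qg_gates: "g \<in> set (qg q i \<phi>0 rest) \<Longrightarrow> gate_qubits g = {gq g} \<and> gq g = q"
  by (drule qg_cases) auto

lemma length_qg: "length (qg q i \<phi>0 rest) = 1 + 2 * length rest"
  by (induction rest) (auto simp: qg_def)

lemma params_qg: "length (filter is_param (qg q i \<phi>0 rest)) = 1 + length rest"
  by (induction rest) (auto simp: qg_def)

lemma filter_blocks:
  "filter (\<lambda>g. gq g = q) (concat (map (\<lambda>i. qg (D + i) i (ph i) (rs i)) [0..<d'])) =
     (if D \<le> q \<and> q < D + d' then qg q (q - D) (ph (q - D)) (rs (q - D)) else [])"
proof (induction d')
  case 0 then show ?case by auto
next
  case (Suc d')
  have f: "filter (\<lambda>g. gq g = q) (qg (D + d') d' (ph d') (rs d')) = (if q = D + d' then qg (D + d') d' (ph d') (rs d') else [])"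
  proof (cases "q = D + d'")
    case True then show ?thesis by (auto intro!: filter_True dest: qg_gates)
  next
    case False then show ?thesis by (auto intro!: filter_False dest: qg_gates)
  qed
  show ?case by (auto simp: Suc.IH f)
qed

lemma params_blocks:
  "length (filter is_param (concat (map (\<lambda>i. qg (D + i) i (ph i) (rs i)) [0..<d']))) = (\<Sum>i<d'. 1 + length (rs i))"
  by (induction d') (auto simp: params_qg)

lemma wf_blocks:
  assumes "D + d \<le> n"
  shows "\<forall>g\<in>set (concat (map (\<lambda>i. qg (D + i) i (ph i) (rs i)) [0..<d])). wf_gate n d g"
proof
  fix g assume "g \<in> set (concat (map (\<lambda>i. qg (D + i) i (ph i) (rs i)) [0..<d]))"
  then obtain i where i: "i < d" "g \<in> set (qg (D + i) i (ph i) (rs i))" by auto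
  from qg_cases[OF i(2)] show "wf_gate n d g" using i(1) assms by auto
qed

lemma gates_single:
  "\<forall>g\<in>set (concat (map (\<lambda>i. qg (D + i) i (ph i) (rs i)) [0..<d])). gate_qubits g = {gq g}"
  using qg_gates by fastforce

theorem corollaryS4:
  "\<exists>C::real. \<forall>(d::nat) (K::nat) (s::nat) (\<beta>::real) (f::(nat \<Rightarrow> real) \<Rightarrow> real)
       (\<alpha>::nat \<Rightarrow> nat) (\<eta>::nat \<Rightarrow> nat).
     1 \<le> d \<longrightarrow> 1 \<le> K \<longrightarrow> 1 \<le> s \<longrightarrow> holder_smooth d \<beta> f \<longrightarrow>
     (\<forall>\<alpha>' \<eta>'. multi_index d \<alpha>' \<and> mi_norm d \<alpha>' \<le> s \<and> (\<forall>i<d. \<eta>' i < K) \<longrightarrow>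
        tcoef d f \<alpha>' (grid_point d K \<eta>') \<in> {-1..1}) \<longrightarrow>
     multi_index d \<alpha> \<longrightarrow> mi_norm d \<alpha> \<le> s \<longrightarrow> (\<forall>i<d. \<eta> i < K) \<longrightarrow>
     (\<exists>(gs::gate list) (a::nat).
        let m = reg_bits K; n = d * m + a + d; \<psi>0 = in_state d m a \<eta> in
        (\<forall>g\<in>set gs. wf_gate n d g) \<and>
        real n \<le> C * real d * (log 2 (real K) + 1) \<and>
        real (circ_depth n gs) \<le> C * (real K ^ d + real s) \<and>
        num_params gs \<le> K ^ d + s + d \<and>
        (\<forall>x\<in>cube d.
           braket n \<psi>0 (circ_sem (\<lambda>i. x i - real (\<eta> i) / real K) gs \<psi>0) =
           complex_of_real (tcoef d f \<alpha> (grid_point d K \<eta>) *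
              mono_pow d (\<lambda>i. x i - real (\<eta> i) / real K) \<alpha>)))"
proof (rule exI[of _ 3], intro allI impI)
  fix d K s :: nat and \<beta> :: real and f :: "(nat \<Rightarrow> real) \<Rightarrow> real" and \<alpha> \<eta> :: "nat \<Rightarrow> nat"
  assume d1: "1 \<le> d" and K1: "1 \<le> K" and s1: "1 \<le> s" and "holder_smooth d \<beta> f"
    and coef: "\<forall>\<alpha>' \<eta>'. multi_index d \<alpha>' \<and> mi_norm d \<alpha>' \<le> s \<and> (\<forall>i<d. \<eta>' i < K) \<longrightarrow>
        tcoef d f \<alpha>' (grid_point d K \<eta>') \<in> {-1..1}"
    and mi: "multi_index d \<alpha>" and ns: "mi_norm d \<alpha> \<le> s" and eta: "\<forall>i<d. \<eta> i < K"
  define c where "c = tcoef d f \<alpha> (grid_point d K \<eta>)"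
  have "c \<in> {-1..1}" using coef mi ns eta unfolding c_def by blast
  then have c: "\<bar>c\<bar> \<le> 1" by (simp add: abs_le_iff)
  define cc where "cc i = (if i = 0 then c else 1)" for i :: nat
  have cc: "\<bar>cc i\<bar> \<le> 1" for i using c by (simp add: cc_def)
  have "\<forall>i. \<exists>p. length (snd p) = \<alpha> i \<and>
          (\<forall>y. -1 \<le> y \<and> y \<le> 1 \<longrightarrow> amp (run1 y (fst p) (snd p) plusv) = complex_of_real (cc i * y ^ \<alpha> i))"
  proof
    fix i
    from qsp_target[OF cc[of i], of "\<alpha> i"] obtain \<phi>0 rest where
      "length rest = \<alpha> i" "\<forall>y. -1 \<le> y \<and> y \<le> 1 \<longrightarrow> amp (run1 y \<phi>0 rest plusv) = complex_of_real (cc i * y ^ \<alpha> i)"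
      by blast
    then show "\<exists>p. length (snd p) = \<alpha> i \<and>
          (\<forall>y. -1 \<le> y \<and> y \<le> 1 \<longrightarrow> amp (run1 y (fst p) (snd p) plusv) = complex_of_real (cc i * y ^ \<alpha> i))"
      by (intro exI[of _ "(\<phi>0, rest)"]) auto
  qed
  then obtain P where P: "\<And>i. length (snd (P i)) = \<alpha> i"
    "\<And>i y. -1 \<le> y \<Longrightarrow> y \<le> 1 \<Longrightarrow> amp (run1 y (fst (P i)) (snd (P i)) plusv) = complex_of_real (cc i * y ^ \<alpha> i)"
    by metis
  define ph where "ph i = fst (P i)" for i
  define rs where "rs i = snd (P i)" for i
  define m where "m = reg_bits K"
  define D where "D = d * m"
  define n where "n = D + d"
  define gs where "gs = concat (map (\<lambda>i. qg (D + i) i (ph i) (rs i)) [0..<d])"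
  have n_eq: "d * m + 0 + d = n" by (simp add: n_def D_def)
  have ai: "\<alpha> i \<le> s" if "i < d" for i
  proof -
    have "\<alpha> i \<le> (\<Sum>j<d. \<alpha> j)" by (rule member_le_sum) (use that in auto)
    then show ?thesis using ns by (simp add: mi_norm_def)
  qed
  have wf: "\<forall>g\<in>set gs. wf_gate n d g" unfolding gs_def by (rule wf_blocks) (simp add: n_def)
  have L0: "0 \<le> log 2 (real K)" using K1 by simp
  have mle: "real m \<le> log 2 (real K) + 1"
  proof -
    have "0 \<le> \<lceil>log 2 (real K)\<rceil>" using L0 by simp
    then have "real m = of_int \<lceil>log 2 (real K)\<rceil>" by (simp add: m_def reg_bits_def)
    also have "\<dots> \<le> log 2 (real K) + 1" using ceiling_correct[of "log 2 (real K)"] by linarith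
    finally show ?thesis .
  qed
  have width: "real n \<le> 3 * real d * (log 2 (real K) + 1)"
  proof -
    have "real d * real m \<le> real d * (log 2 (real K) + 1)" using mle by (intro mult_left_mono) auto
    moreover have "real d * 1 \<le> real d * (log 2 (real K) + 1)" using L0 by (intro mult_left_mono) auto
    moreover have "0 \<le> real d * (log 2 (real K) + 1)" using L0 by simp
    ultimately show ?thesis by (simp add: n_def D_def)
  qed
  have cnt: "fold depth_step gs (\<lambda>_. 0) q \<le> 2 * s + 1" for q
  proof -
    have "fold depth_step gs (\<lambda>_. 0) q = length (filter (\<lambda>g. gq g = q) gs)"
      using fold_depth[OF gates_single] by (simp add: gs_def)
    also have "\<dots> = (if D \<le> q \<and> q < D + d then length (qg q (q - D) (ph (q - D)) (rs (q - D))) else 0)"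
      by (simp add: gs_def filter_blocks)
    also have "\<dots> \<le> 2 * s + 1"
      using ai[of "q - D"] by (auto simp: length_qg rs_def P(1))
    finally show ?thesis .
  qed
  have depth: "real (circ_depth n gs) \<le> 3 * (real K ^ d + real s)"
  proof -
    have h: "circ_depth n gs \<le> 2 * s + 1"
      unfolding circ_depth_def using cnt by (subst Max_le_iff) auto
    then have "real (circ_depth n gs) \<le> real (2 * s + 1)" by (simp only: of_nat_le_iff)
    then have "real (circ_depth n gs) \<le> 2 * real s + 1" by simp
    moreover have "(1::real) \<le> real K ^ d" using K1 by simp
    moreover have "(1::real) \<le> real s" using s1 by simp
    ultimately show ?thesis by (smt (verit))
  qed
  have params: "num_params gs \<le> K ^ d + s + d"
  proof -
    have "num_params gs = (\<Sum>i<d. 1 + length (rs i))" by (simp add: num_params_def gs_def params_blocks)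
    also have "\<dots> = (\<Sum>i<d. (1::nat)) + (\<Sum>i<d. \<alpha> i)" unfolding rs_def P(1) by (rule sum.distrib)
    also have "\<dots> = d + mi_norm d \<alpha>" by (simp add: mi_norm_def)
    finally show ?thesis using ns by simp
  qed
  have amp_eq: "braket n (in_state d m 0 \<eta>) (circ_sem (\<lambda>i. x i - real (\<eta> i) / real K) gs (in_state d m 0 \<eta>)) =
           complex_of_real (c * mono_pow d (\<lambda>i. x i - real (\<eta> i) / real K) \<alpha>)" if x: "x \<in> cube d" for x
  proof -
    define y where "y i = x i - real (\<eta> i) / real K" for i
    have y: "-1 \<le> y i \<and> y i \<le> 1" if "i < d" for i
    proof -
      have "0 \<le> x i" "x i \<le> 1" using x that by (auto simp: cube_def)
      moreover have "0 \<le> real (\<eta> i) / real K" "real (\<eta> i) / real K \<le> 1"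
        using eta that K1 by (auto simp: divide_simps)
      ultimately show ?thesis unfolding y_def by linarith
    qed
    have st: "in_state d m 0 \<eta> = pstate n (h0 d m \<eta>)" by (simp add: in_state_pstate n_def D_def)
    define h1 where "h1 j = (if D \<le> j \<and> j < D + d then run1 (y (j - D)) (ph (j - D)) (rs (j - D)) (h0 d m \<eta> j) else h0 d m \<eta> j)" for j
    have cs: "circ_sem y gs (pstate n (h0 d m \<eta>)) = pstate n h1"
      unfolding gs_def h1_def by (rule circ_blocks[where d'=d and d=d]) (simp_all add: n_def)
    have y_eq: "(\<lambda>i. x i - real (\<eta> i) / real K) = y" by (simp add: y_def fun_eq_iff)
    define S where "S j = cnj (h0 d m \<eta> j False) * h1 j False + cnj (h0 d m \<eta> j True) * h1 j True" for j
    have br: "braket n (in_state d m 0 \<eta>) (circ_sem y gs (in_state d m 0 \<eta>)) = (\<Prod>j<n. S j)"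
      by (simp add: st cs braket_pstate S_def)
    have split: "{..<n} = {..<D} \<union> {D..<D + d}" by (simp add: n_def ivl_disj_un_one(2))
    have "(\<Prod>j<n. S j) = (\<Prod>j<D. S j) * (\<Prod>j\<in>{D..<D + d}. S j)"
      unfolding split by (rule prod.union_disjoint) auto
    also have "(\<Prod>j<D. S j) = 1"
      by (rule prod.neutral) (auto simp: S_def h1_def h0_def D_def)
    also have "(\<Prod>j\<in>{D..<D + d}. S j) = (\<Prod>i<d. S (i + D))"
      using prod.shift_bounds_nat_ivl[of S 0 D d] by (simp add: atLeast0LessThan add.commute)
    also have "\<dots> = (\<Prod>i<d. complex_of_real (cc i * y i ^ \<alpha> i))"
    proof (rule prod.cong)
      fix i assume i: "i \<in> {..<d}"
      have hh: "h0 d m \<eta> (i + D) = plusv" by (simp add: h0_def D_def)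
      have "S (i + D) = amp (run1 (y i) (ph i) (rs i) plusv)"
        using i by (simp add: S_def h1_def hh amp_def plusv_def)
      also have "\<dots> = complex_of_real (cc i * y i ^ \<alpha> i)"
        using y[of i] i by (simp add: ph_def rs_def P(2))
      finally show "S (i + D) = complex_of_real (cc i * y i ^ \<alpha> i)" .
    qed simp
    also have "\<dots> = complex_of_real ((\<Prod>i<d. cc i) * mono_pow d y \<alpha>)"
      by (simp add: mono_pow_def prod.distrib)
    also have "(\<Prod>i<d. cc i) = c" using d1 by (simp add: cc_def prod.delta)
    finally show ?thesis using br by (simp add: y_eq)
  qed
  show "\<exists>(gs::gate list) (a::nat).
        let m = reg_bits K; n = d * m + a + d; \<psi>0 = in_state d m a \<eta> in
        (\<forall>g\<in>set gs. wf_gate n d g) \<and>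
        real n \<le> 3 * real d * (log 2 (real K) + 1) \<and>
        real (circ_depth n gs) \<le> 3 * (real K ^ d + real s) \<and>
        num_params gs \<le> K ^ d + s + d \<and>
        (\<forall>x\<in>cube d.
           braket n \<psi>0 (circ_sem (\<lambda>i. x i - real (\<eta> i) / real K) gs \<psi>0) =
           complex_of_real (tcoef d f \<alpha> (grid_point d K \<eta>) *
              mono_pow d (\<lambda>i. x i - real (\<eta> i) / real K) \<alpha>))"
    apply (rule exI[of _ gs], rule exI[of _ 0])
    unfolding Let_def m_def[symmetric] n_eq c_def[symmetric]
    using wf width depth params amp_eq by blast
qed

end
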